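(* Let $B=(A,\mathcal R)$ be a blueprint, $\sim$ a congruence on $B$, and $i:B\to B_{\mathbb Z}$ the canonical map. Then $$I_{\mathbb Z}(\sim)=\Big\{\textstyle\sum_k i(c_k)-\sum_k i(d_k)\ :\ c_k,d_k\in B,\ c_k\sim d_k\text{ for all }k\Big\}$$ is an ideal of the ring $B_{\mathbb Z}$, and $(B/\sim)_{\mathbb Z}\cong B_{\mathbb Z}/I_{\mathbb Z}(\sim)$ canonically (compatibly with the maps from $\mathbb Z[A]$). If $\sim=\sim_I$ for an ideal $I$ of $B$, then $$I_{\mathbb Z}(\sim_I)=\Big\{\textstyle\sum_k i(c_k)-\sum_k i(d_k)\ :\ c_k,d_k\in I\Big\}.$$
   Context: A monoid is a commutative semigroup $A$, written multiplicatively, with neutral element $1$. For a monoid $A$, $\mathbb N[A]$ denotes the semiring of finite formal sums $\sum a_i$ of elements $a_i\in A$ (repetitions allowed), with empty sum $\underline0$ and multiplication extended bilinearly from $A$. A pre-addition on $A$ is a relation $\mathcal R\subseteq\mathbb N[A]\times\mathbb N[A]$, written $\sum a_i\equiv\sum b_j$, which is an equivalence relation and satisfies: if $\sum a_i\equiv\sum b_j$ and $\sum c_k\equiv\sum d_l$, then $\sum a_i+\sum c_k\equiv\sum b_j+\sum d_l$ and $\sum_{i,k}a_ic_k\equiv\sum_{j,l}b_jd_l$. A blueprint $B=(A,\mathcal R)$ is a monoid $A$ with a pre-addition $\mathcal R$; we write $a\in B$ for $a\in A$. An element $e$ with $e\equiv\underline0$ is a zero of $B$. $B_{\mathbb Z}$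 is the ring $\mathbb Z[A]/\mathcal I(\mathcal R)$, where $\mathbb Z[A]$ is the monoid ring and $\mathcal I(\mathcal R)=\{\sum a_i-\sum b_j:\sum a_i\equiv\sum b_j\}$ (an ideal); $i:B\to B_{\mathbb Z}$ is induced by $A\to\mathbb Z[A]$. For an equivalence relation $\sim$ on $A$, its linear extension $\sim_{\mathbb N}$ is the equivalence relation on $\mathbb N[A]$ generated by $\sum_{i=1}^n a_i\sim_{\mathbb N}\sum_{i=1}^n b_i$ whenever $a_i\sim b_i$ for all $i$; $\sim_{\mathcal R}$ is the smallest equivalence relation on $\mathbb N[A]$ containing $\mathcal R$ and $\sim_{\mathbb N}$. A congruence on $B$ is an equivalence relation $\sim$ on $A$ such that (C1) $\sim_{\mathbb N}$ is a pre-addition on $A$, and (C2) the restriction of $\sim_{\mathcal R}$ to $A$ equals $\sim$. The quotient $B/\sim$ has monoid $A/\sim$ and the smallest pre-addition containing all $\sum[a_i]\equiv\sum[b_j]$ with $\sum a_i\equiv\sum b_j$ in $B$. For a subset $I\subseteq B$, $a\sim^I b$ iff $a=b$ or $a,b\in I$; and $a\sim_I b$ iff there is a finite sequence $a\equiv\sum_k c_{1,k}\sim^I_{\mathbb N}\sum_k d_{1,k}\equiv\cdots\sim^I_{\mathbb N}\sum_k d_{n,k}\equiv b$ with $c_{i,k},d_{i,k}\in A$. An ideal of $B$ is a subset $I$ with (I1) $IB\subseteq I$; (I2) every zero of $B$ lies in $I$; (I3) if $a\sim_I b$ and $b\in I$ then $a\in I$. For an ideal $I$ containing all absorbing elements (elements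 $e$ with $eb\equiv e$ for all $b$), $\sim_I$ is a congruence. *)

theory Defs
  imports "HOL-Library.Multiset" "HOL-Algebra.Algebra"
begin

text \<open>Blueprints. The monoid A is a commutative HOL-Algebra monoid M (with carrier).
  N[A] is rendered as finite multisets over carrier M; formal sums are multisets.\<close>

definition NA :: "('a,'b) monoid_scheme \<Rightarrow> 'a multiset set" where
  "NA M = {Z. set_mset Z \<subseteq> carrier M}"

definition mset_mult :: "('a,'b) monoid_scheme \<Rightarrow> 'a multiset \<Rightarrow> 'a multiset \<Rightarrow> 'a multiset" where
  "mset_mult M Xa Ya = (\<Sum>x\<in>#Xa. image_mset (\<lambda>y. x \<otimes>\<^bsub>M\<^esub> y) Ya)"

definition pre_addition :: "('a,'b) monoid_scheme \<Rightarrow> ('a multiset \<times> 'a multiset) set \<Rightarrow> bool" where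
  "pre_addition M R \<longleftrightarrow> equiv (NA M) R \<and>
     (\<forall>Xa Ya Z W. (Xa,Ya) \<in> R \<longrightarrow> (Z,W) \<in> R \<longrightarrow>
        (Xa + Z, Ya + W) \<in> R \<and> (mset_mult M Xa Z, mset_mult M Ya W) \<in> R)"

definition blueprint :: "('a,'b) monoid_scheme \<Rightarrow> ('a multiset \<times> 'a multiset) set \<Rightarrow> bool" where
  "blueprint M R \<longleftrightarrow> comm_monoid M \<and> pre_addition M R"

definition equiv_gen :: "'x set \<Rightarrow> ('x \<times> 'x) set \<Rightarrow> ('x \<times> 'x) set" where
  "equiv_gen U G = \<Inter>{S. equiv U S \<and> G \<subseteq> S}"

definition lin_ext :: "('a,'b) monoid_scheme \<Rightarrow> ('a \<times> 'a) set \<Rightarrow> ('a multiset \<times> 'a multiset) set" where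
  "lin_ext M r = equiv_gen (NA M)
     {(mset xs, mset ys) | xs ys. set xs \<subseteq> carrier M \<and> set ys \<subseteq> carrier M \<and>
                                 list_all2 (\<lambda>a b. (a,b) \<in> r) xs ys}"

definition sim_R :: "('a,'b) monoid_scheme \<Rightarrow> ('a multiset \<times> 'a multiset) set \<Rightarrow> ('a \<times> 'a) set
    \<Rightarrow> ('a multiset \<times> 'a multiset) set" where
  "sim_R M R r = equiv_gen (NA M) (R \<union> lin_ext M r)"

definition bp_congruence :: "('a,'b) monoid_scheme \<Rightarrow> ('a multiset \<times> 'a multiset) set \<Rightarrow> ('a \<times> 'a) set \<Rightarrow> bool" where
  "bp_congruence M R r \<longleftrightarrow> equiv (carrier M) r \<and>
     pre_addition M (lin_ext M r) \<and>
     {(a,b). a \<in> carrier M \<and> b \<in> carrier M \<and> ({#a#},{#b#}) \<in> sim_R M R r} = r"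

definition quot_monoid :: "('a,'b) monoid_scheme \<Rightarrow> ('a \<times> 'a) set \<Rightarrow> 'a set monoid" where
  "quot_monoid M r = \<lparr> carrier = carrier M // r,
     Group.monoid.mult = (\<lambda>P Q. r `` ((\<lambda>(x,y). x \<otimes>\<^bsub>M\<^esub> y) ` (P \<times> Q))),
     one = r `` {\<one>\<^bsub>M\<^esub>} \<rparr>"

definition quot_preadd :: "('a,'b) monoid_scheme \<Rightarrow> ('a multiset \<times> 'a multiset) set \<Rightarrow> ('a \<times> 'a) set
    \<Rightarrow> ('a set multiset \<times> 'a set multiset) set" where
  "quot_preadd M R r = \<Inter>{S. pre_addition (quot_monoid M r) S \<and>
      {(image_mset (\<lambda>a. r `` {a}) Xa, image_mset (\<lambda>a. r `` {a}) Ya) | Xa Ya. (Xa,Ya) \<in> R} \<subseteq> S}"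

text \<open>The monoid ring Z[A]: finitely supported integer functions on carrier M.\<close>
definition Zring :: "('a,'b) monoid_scheme \<Rightarrow> ('a \<Rightarrow> int) ring" where
  "Zring M = \<lparr> carrier = {f. finite {x. f x \<noteq> 0} \<and> {x. f x \<noteq> 0} \<subseteq> carrier M},
     Group.monoid.mult = (\<lambda>f g x. \<Sum>p\<in>{(a,b). f a \<noteq> 0 \<and> g b \<noteq> 0 \<and> a \<otimes>\<^bsub>M\<^esub> b = x}. f (fst p) * g (snd p)),
     one = (\<lambda>x. if x = \<one>\<^bsub>M\<^esub> then 1 else 0),
     ring.zero = (\<lambda>x. 0),
     ring.add = (\<lambda>f g x. f x + g x) \<rparr>"

definition ms_int :: "'a multiset \<Rightarrow> 'a \<Rightarrow> int" where
  "ms_int Xa = (\<lambda>x. int (count Xa x))"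

definition IR :: "('a multiset \<times> 'a multiset) set \<Rightarrow> ('a \<Rightarrow> int) set" where
  "IR R = {(\<lambda>x. ms_int Xa x - ms_int Ya x) | Xa Ya. (Xa,Ya) \<in> R}"

definition BZ :: "('a,'b) monoid_scheme \<Rightarrow> ('a multiset \<times> 'a multiset) set \<Rightarrow> ('a \<Rightarrow> int) set ring" where
  "BZ M R = Zring M Quot IR R"

definition piZ :: "('a,'b) monoid_scheme \<Rightarrow> ('a multiset \<times> 'a multiset) set \<Rightarrow> ('a \<Rightarrow> int) \<Rightarrow> ('a \<Rightarrow> int) set" where
  "piZ M R f = IR R +>\<^bsub>Zring M\<^esub> f"

definition iZ :: "('a,'b) monoid_scheme \<Rightarrow> ('a multiset \<times> 'a multiset) set \<Rightarrow> 'a \<Rightarrow> ('a \<Rightarrow> int) set" where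
  "iZ M R a = piZ M R (\<lambda>x. if x = a then 1 else 0)"

definition IZ :: "('a,'b) monoid_scheme \<Rightarrow> ('a multiset \<times> 'a multiset) set \<Rightarrow> ('a \<times> 'a) set
    \<Rightarrow> ('a \<Rightarrow> int) set set" where
  "IZ M R r = {(\<Oplus>\<^bsub>BZ M R\<^esub> k\<in>{..<n}. iZ M R (c k)) \<ominus>\<^bsub>BZ M R\<^esub> (\<Oplus>\<^bsub>BZ M R\<^esub> k\<in>{..<n}. iZ M R (d k))
     | (n::nat) c d. \<forall>k<n. c k \<in> carrier M \<and> d k \<in> carrier M \<and> (c k, d k) \<in> r}"

text \<open>The map Z[A] -> Z[A/r] induced by A -> A/r.\<close>
definition zpush :: "('a,'b) monoid_scheme \<Rightarrow> ('a \<times> 'a) set \<Rightarrow> ('a \<Rightarrow> int) \<Rightarrow> 'a set \<Rightarrow> int" where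
  "zpush M r f = (\<lambda>P. if P \<in> carrier M // r then (\<Sum>x\<in>{x\<in>P. f x \<noteq> 0}. f x) else 0)"

definition sim_up :: "'a set \<Rightarrow> 'a set \<Rightarrow> ('a \<times> 'a) set" where
  "sim_up U I = {(a,b). a \<in> U \<and> b \<in> U \<and> (a = b \<or> (a \<in> I \<and> b \<in> I))}"

definition sim_low :: "('a,'b) monoid_scheme \<Rightarrow> ('a multiset \<times> 'a multiset) set \<Rightarrow> 'a set \<Rightarrow> ('a \<times> 'a) set" where
  "sim_low M R I = {(a,b). a \<in> carrier M \<and> b \<in> carrier M \<and>
      ({#a#},{#b#}) \<in> (R O lin_ext M (sim_up (carrier M) I))\<^sup>+ O R}"

definition bp_ideal :: "('a,'b) monoid_scheme \<Rightarrow> ('a multiset \<times> 'a multiset) set \<Rightarrow> 'a set \<Rightarrow> bool" where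
  "bp_ideal M R I \<longleftrightarrow> I \<subseteq> carrier M \<and>
     (\<forall>x\<in>I. \<forall>b\<in>carrier M. x \<otimes>\<^bsub>M\<^esub> b \<in> I) \<and>
     (\<forall>e\<in>carrier M. ({#e#}, {#}) \<in> R \<longrightarrow> e \<in> I) \<and>
     (\<forall>a b. (a,b) \<in> sim_low M R I \<longrightarrow> b \<in> I \<longrightarrow> a \<in> I)"

end

theory Submission
  imports Defs
begin

lemma Zring_carrier: "carrier (Zring M) = {f. finite {x. f x \<noteq> 0} \<and> {x. f x \<noteq> 0} \<subseteq> carrier M}"
  by (simp add: Zring_def)

lemma Zring_add[simp]: "f \<oplus>\<^bsub>Zring M\<^esub> g = (\<lambda>x. f x + g x)"
  by (simp add: Zring_def)

lemma Zring_zero[simp]: "\<zero>\<^bsub>Zring M\<^esub> = (\<lambda>x. 0)"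
  by (simp add: Zring_def)

lemma Zring_one: "\<one>\<^bsub>Zring M\<^esub> = (\<lambda>x. if x = \<one>\<^bsub>M\<^esub> then 1 else 0)"
  by (simp add: Zring_def)

lemma Zring_mult_eq:
  assumes "finite S" "finite T" "{x. f x \<noteq> 0} \<subseteq> S" "{x. g x \<noteq> 0} \<subseteq> T"
  shows "f \<otimes>\<^bsub>Zring M\<^esub> g = (\<lambda>x. \<Sum>a\<in>S. \<Sum>b\<in>T. if a \<otimes>\<^bsub>M\<^esub> b = x then f a * g b else 0)"
proof
  fix x
  let ?Q = "{(a,b). f a \<noteq> 0 \<and> g b \<noteq> 0 \<and> a \<otimes>\<^bsub>M\<^esub> b = x}"
  have Q: "?Q \<subseteq> S \<times> T" using assms by auto
  have "(\<Sum>a\<in>S. \<Sum>b\<in>T. if a \<otimes>\<^bsub>M\<^esub> b = x then f a * g b else 0)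
     = (\<Sum>p\<in>S \<times> T. if fst p \<otimes>\<^bsub>M\<^esub> snd p = x then f (fst p) * g (snd p) else 0)"
    by (simp add: sum.cartesian_product case_prod_beta)
  also have "\<dots> = (\<Sum>p\<in>?Q. if fst p \<otimes>\<^bsub>M\<^esub> snd p = x then f (fst p) * g (snd p) else 0)"
    by (rule sum.mono_neutral_right) (use assms Q in auto)
  also have "\<dots> = (\<Sum>p\<in>?Q. f (fst p) * g (snd p))"
    by (rule sum.cong) auto
  finally show "(f \<otimes>\<^bsub>Zring M\<^esub> g) x = (\<Sum>a\<in>S. \<Sum>b\<in>T. if a \<otimes>\<^bsub>M\<^esub> b = x then f a * g b else 0)"
    by (simp add: Zring_def)
qed

lemma sum4_swap:
  fixes F :: "'y \<Rightarrow> 'c \<Rightarrow> 'a \<Rightarrow> 'b \<Rightarrow> int"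
  shows "(\<Sum>y\<in>V. \<Sum>c\<in>U. \<Sum>a\<in>S. \<Sum>b\<in>T. F y c a b) = (\<Sum>a\<in>S. \<Sum>b\<in>T. \<Sum>c\<in>U. \<Sum>y\<in>V. F y c a b)"
proof -
  have "(\<Sum>y\<in>V. \<Sum>c\<in>U. \<Sum>a\<in>S. \<Sum>b\<in>T. F y c a b) = (\<Sum>y\<in>V. \<Sum>a\<in>S. \<Sum>c\<in>U. \<Sum>b\<in>T. F y c a b)"
    by (rule sum.cong[OF refl], rule sum.swap)
  also have "\<dots> = (\<Sum>a\<in>S. \<Sum>y\<in>V. \<Sum>c\<in>U. \<Sum>b\<in>T. F y c a b)" by (rule sum.swap)
  also have "\<dots> = (\<Sum>a\<in>S. \<Sum>y\<in>V. \<Sum>b\<in>T. \<Sum>c\<in>U. F y c a b)"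
    by (intro sum.cong[OF refl], rule sum.swap)
  also have "\<dots> = (\<Sum>a\<in>S. \<Sum>b\<in>T. \<Sum>y\<in>V. \<Sum>c\<in>U. F y c a b)"
    by (intro sum.cong[OF refl], rule sum.swap)
  also have "\<dots> = (\<Sum>a\<in>S. \<Sum>b\<in>T. \<Sum>c\<in>U. \<Sum>y\<in>V. F y c a b)"
    by (intro sum.cong[OF refl], rule sum.swap)
  finally show ?thesis .
qed

lemma sum3_swap:
  fixes F :: "'y \<Rightarrow> 'b \<Rightarrow> 'c \<Rightarrow> int"
  shows "(\<Sum>y\<in>V. \<Sum>b\<in>T. \<Sum>c\<in>U. F y b c) = (\<Sum>b\<in>T. \<Sum>c\<in>U. \<Sum>y\<in>V. F y b c)"
proof -
  have "(\<Sum>y\<in>V. \<Sum>b\<in>T. \<Sum>c\<in>U. F y b c) = (\<Sum>b\<in>T. \<Sum>y\<in>V. \<Sum>c\<in>U. F y b c)"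
    by (rule sum.swap)
  also have "\<dots> = (\<Sum>b\<in>T. \<Sum>c\<in>U. \<Sum>y\<in>V. F y b c)"
    by (intro sum.cong[OF refl], rule sum.swap)
  finally show ?thesis .
qed

lemma sum_if_eq_conj:
  assumes "finite V" "z \<in> V"
  shows "(\<Sum>y\<in>V. if z = y \<and> P y then (K::int) else 0) = (if P z then K else 0)"
proof -
  have "(\<Sum>y\<in>V. if z = y \<and> P y then K else 0) = (\<Sum>y\<in>V. if z = y then (if P z then K else 0) else 0)"
    by (rule sum.cong) auto
  also have "\<dots> = (if P z then K else 0)" using assms by (simp add: sum.delta)
  finally show ?thesis .
qed

lemma Zring_mult_supp:
  assumes "f \<in> carrier (Zring M)" "g \<in> carrier (Zring M)"
  shows "{x. (f \<otimes>\<^bsub>Zring M\<^esub> g) x \<noteq> 0} \<subseteq> (\<lambda>(a,b). a \<otimes>\<^bsub>M\<^esub> b) ` ({x. f x \<noteq> 0} \<times> {x. g x \<noteq> 0})"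
proof
  fix x assume x: "x \<in> {x. (f \<otimes>\<^bsub>Zring M\<^esub> g) x \<noteq> 0}"
  show "x \<in> (\<lambda>(a,b). a \<otimes>\<^bsub>M\<^esub> b) ` ({x. f x \<noteq> 0} \<times> {x. g x \<noteq> 0})"
  proof (rule ccontr)
    assume nx: "x \<notin> (\<lambda>(a,b). a \<otimes>\<^bsub>M\<^esub> b) ` ({x. f x \<noteq> 0} \<times> {x. g x \<noteq> 0})"
    have "(f \<otimes>\<^bsub>Zring M\<^esub> g) x = 0"
      using nx by (auto simp: Zring_def intro!: sum.neutral)
    with x show False by simp
  qed
qed

lemma Zring_cring:
  assumes cm: "comm_monoid M"
  shows "cring (Zring M)"
proof -
  interpret M: comm_monoid M by (rule cm)
  let ?Z = "Zring M"
  let ?C = "carrier ?Z"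
  have C: "f \<in> ?C \<longleftrightarrow> finite {x. f x \<noteq> 0} \<and> {x. f x \<noteq> 0} \<subseteq> carrier M" for f
    by (simp add: Zring_def)
  have mclosed: "f \<otimes>\<^bsub>?Z\<^esub> g \<in> ?C" if "f \<in> ?C" "g \<in> ?C" for f g
  proof -
    have "{x. (f \<otimes>\<^bsub>?Z\<^esub> g) x \<noteq> 0} \<subseteq> (\<lambda>(a,b). a \<otimes>\<^bsub>M\<^esub> b) ` ({x. f x \<noteq> 0} \<times> {x. g x \<noteq> 0})"
      by (rule Zring_mult_supp[OF that])
    moreover have "(\<lambda>(a,b). a \<otimes>\<^bsub>M\<^esub> b) ` ({x. f x \<noteq> 0} \<times> {x. g x \<noteq> 0}) \<subseteq> carrier M"
      using that by (auto simp: C)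
    moreover have "finite ((\<lambda>(a,b). a \<otimes>\<^bsub>M\<^esub> b) ` ({x. f x \<noteq> 0} \<times> {x. g x \<noteq> 0}))"
      using that by (auto simp: C)
    ultimately show ?thesis by (auto simp: C intro: finite_subset)
  qed
  have oneC: "\<one>\<^bsub>?Z\<^esub> \<in> ?C"
  proof -
    have "{x. \<one>\<^bsub>?Z\<^esub> x \<noteq> 0} = {\<one>\<^bsub>M\<^esub>}" by (auto simp: Zring_one)
    then show ?thesis by (simp add: C)
  qed
  have assoc: "(f \<otimes>\<^bsub>?Z\<^esub> g) \<otimes>\<^bsub>?Z\<^esub> h = f \<otimes>\<^bsub>?Z\<^esub> (g \<otimes>\<^bsub>?Z\<^esub> h)"
    if f: "f \<in> ?C" and g: "g \<in> ?C" and h: "h \<in> ?C" for f g h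
  proof
    fix x
    define S where "S = {x. f x \<noteq> 0}"
    define T where "T = {x. g x \<noteq> 0}"
    define U where "U = {x. h x \<noteq> 0}"
    define V where "V = (\<lambda>(a,b). a \<otimes>\<^bsub>M\<^esub> b) ` (S \<times> T)"
    define W where "W = (\<lambda>(a,b). a \<otimes>\<^bsub>M\<^esub> b) ` (T \<times> U)"
    have fin: "finite S" "finite T" "finite U" "finite V" "finite W"
      using f g h by (auto simp: C S_def T_def U_def V_def W_def)
    have sub: "S \<subseteq> carrier M" "T \<subseteq> carrier M" "U \<subseteq> carrier M"
      using f g h by (auto simp: C S_def T_def U_def)
    have fg: "f \<otimes>\<^bsub>?Z\<^esub> g = (\<lambda>x. \<Sum>a\<in>S. \<Sum>b\<in>T. if a \<otimes>\<^bsub>M\<^esub> b = x then f a * g b else 0)"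
      by (rule Zring_mult_eq) (use fin in \<open>auto simp: S_def T_def\<close>)
    have gh: "g \<otimes>\<^bsub>?Z\<^esub> h = (\<lambda>x. \<Sum>a\<in>T. \<Sum>b\<in>U. if a \<otimes>\<^bsub>M\<^esub> b = x then g a * h b else 0)"
      by (rule Zring_mult_eq) (use fin in \<open>auto simp: T_def U_def\<close>)
    have fgh: "(f \<otimes>\<^bsub>?Z\<^esub> g) \<otimes>\<^bsub>?Z\<^esub> h = (\<lambda>x. \<Sum>y\<in>V. \<Sum>c\<in>U. if y \<otimes>\<^bsub>M\<^esub> c = x then (f \<otimes>\<^bsub>?Z\<^esub> g) y * h c else 0)"
      by (rule Zring_mult_eq) (use fin Zring_mult_supp[OF f g] in \<open>auto simp: U_def V_def S_def T_def\<close>)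
    have fgh2: "f \<otimes>\<^bsub>?Z\<^esub> (g \<otimes>\<^bsub>?Z\<^esub> h) = (\<lambda>x. \<Sum>a\<in>S. \<Sum>y\<in>W. if a \<otimes>\<^bsub>M\<^esub> y = x then f a * (g \<otimes>\<^bsub>?Z\<^esub> h) y else 0)"
      by (rule Zring_mult_eq) (use fin Zring_mult_supp[OF g h] in \<open>auto simp: U_def W_def S_def T_def\<close>)
    have "((f \<otimes>\<^bsub>?Z\<^esub> g) \<otimes>\<^bsub>?Z\<^esub> h) x = (\<Sum>y\<in>V. \<Sum>c\<in>U. \<Sum>a\<in>S. \<Sum>b\<in>T.
          if a \<otimes>\<^bsub>M\<^esub> b = y \<and> y \<otimes>\<^bsub>M\<^esub> c = x then f a * g b * h c else 0)"
      unfolding fgh unfolding fg by (auto simp: sum_distrib_right intro!: sum.cong)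
    also have "\<dots> = (\<Sum>a\<in>S. \<Sum>b\<in>T. \<Sum>c\<in>U. \<Sum>y\<in>V.
          if a \<otimes>\<^bsub>M\<^esub> b = y \<and> y \<otimes>\<^bsub>M\<^esub> c = x then f a * g b * h c else 0)"
      by (rule sum4_swap)
    also have "\<dots> = (\<Sum>a\<in>S. \<Sum>b\<in>T. \<Sum>c\<in>U.
          if a \<otimes>\<^bsub>M\<^esub> b \<otimes>\<^bsub>M\<^esub> c = x then f a * g b * h c else 0)"
    proof (intro sum.cong refl)
      fix a b c assume "a \<in> S" "b \<in> T" "c \<in> U"
      then have "a \<otimes>\<^bsub>M\<^esub> b \<in> V" by (auto simp: V_def)
      then show "(\<Sum>y\<in>V. if a \<otimes>\<^bsub>M\<^esub> b = y \<and> y \<otimes>\<^bsub>M\<^esub> c = x then f a * g b * h c else 0) =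
          (if a \<otimes>\<^bsub>M\<^esub> b \<otimes>\<^bsub>M\<^esub> c = x then f a * g b * h c else 0)"
        using fin by (simp add: sum_if_eq_conj)
    qed
    also have "\<dots> = (\<Sum>a\<in>S. \<Sum>b\<in>T. \<Sum>c\<in>U.
          if a \<otimes>\<^bsub>M\<^esub> (b \<otimes>\<^bsub>M\<^esub> c) = x then f a * g b * h c else 0)"
    proof (intro sum.cong refl)
      fix a b c assume "a \<in> S" "b \<in> T" "c \<in> U"
      then have "a \<otimes>\<^bsub>M\<^esub> b \<otimes>\<^bsub>M\<^esub> c = a \<otimes>\<^bsub>M\<^esub> (b \<otimes>\<^bsub>M\<^esub> c)"
        using sub by (intro M.m_assoc) auto
      then show "(if a \<otimes>\<^bsub>M\<^esub> b \<otimes>\<^bsub>M\<^esub> c = x then f a * g b * h c else 0) =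
          (if a \<otimes>\<^bsub>M\<^esub> (b \<otimes>\<^bsub>M\<^esub> c) = x then f a * g b * h c else 0)" by simp
    qed
    also have "\<dots> = (\<Sum>a\<in>S. \<Sum>b\<in>T. \<Sum>c\<in>U. \<Sum>y\<in>W.
          if b \<otimes>\<^bsub>M\<^esub> c = y \<and> a \<otimes>\<^bsub>M\<^esub> y = x then f a * g b * h c else 0)"
    proof (intro sum.cong refl)
      fix a b c assume "a \<in> S" "b \<in> T" "c \<in> U"
      then have "b \<otimes>\<^bsub>M\<^esub> c \<in> W" by (auto simp: W_def)
      then show "(if a \<otimes>\<^bsub>M\<^esub> (b \<otimes>\<^bsub>M\<^esub> c) = x then f a * g b * h c else 0) =
          (\<Sum>y\<in>W. if b \<otimes>\<^bsub>M\<^esub> c = y \<and> a \<otimes>\<^bsub>M\<^esub> y = x then f a * g b * h c else 0)"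
        using fin by (simp add: sum_if_eq_conj)
    qed
    also have "\<dots> = (\<Sum>a\<in>S. \<Sum>y\<in>W. \<Sum>b\<in>T. \<Sum>c\<in>U.
          if b \<otimes>\<^bsub>M\<^esub> c = y \<and> a \<otimes>\<^bsub>M\<^esub> y = x then f a * g b * h c else 0)"
      by (rule sum.cong[OF refl], rule sum3_swap[symmetric])
    also have "\<dots> = (f \<otimes>\<^bsub>?Z\<^esub> (g \<otimes>\<^bsub>?Z\<^esub> h)) x"
      unfolding fgh2 unfolding gh by (auto simp: sum_distrib_left mult.assoc intro!: sum.cong)
    finally show "((f \<otimes>\<^bsub>?Z\<^esub> g) \<otimes>\<^bsub>?Z\<^esub> h) x = (f \<otimes>\<^bsub>?Z\<^esub> (g \<otimes>\<^bsub>?Z\<^esub> h)) x" .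
  qed
  have comm: "f \<otimes>\<^bsub>?Z\<^esub> g = g \<otimes>\<^bsub>?Z\<^esub> f" if f: "f \<in> ?C" and g: "g \<in> ?C" for f g
  proof -
    define S where "S = {x. f x \<noteq> 0}"
    define T where "T = {x. g x \<noteq> 0}"
    have fin: "finite S" "finite T" using f g by (auto simp: C S_def T_def)
    have sub: "S \<subseteq> carrier M" "T \<subseteq> carrier M" using f g by (auto simp: C S_def T_def)
    have "f \<otimes>\<^bsub>?Z\<^esub> g = (\<lambda>x. \<Sum>a\<in>S. \<Sum>b\<in>T. if a \<otimes>\<^bsub>M\<^esub> b = x then f a * g b else 0)"
      by (rule Zring_mult_eq) (use fin in \<open>auto simp: S_def T_def\<close>)
    also have "\<dots> = (\<lambda>x. \<Sum>b\<in>T. \<Sum>a\<in>S. if b \<otimes>\<^bsub>M\<^esub> a = x then g b * f a else 0)"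
    proof
      fix x
      have "(\<Sum>a\<in>S. \<Sum>b\<in>T. if a \<otimes>\<^bsub>M\<^esub> b = x then f a * g b else 0)
          = (\<Sum>b\<in>T. \<Sum>a\<in>S. if a \<otimes>\<^bsub>M\<^esub> b = x then f a * g b else 0)" by (rule sum.swap)
      also have "\<dots> = (\<Sum>b\<in>T. \<Sum>a\<in>S. if b \<otimes>\<^bsub>M\<^esub> a = x then g b * f a else 0)"
      proof (intro sum.cong refl)
        fix a b assume "a \<in> S" "b \<in> T"
        then have "a \<otimes>\<^bsub>M\<^esub> b = b \<otimes>\<^bsub>M\<^esub> a" using sub by (intro M.m_comm) auto
        then show "(if a \<otimes>\<^bsub>M\<^esub> b = x then f a * g b else 0) = (if b \<otimes>\<^bsub>M\<^esub> a = x then g b * f a else 0)"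
          by simp
      qed
      finally show "(\<Sum>a\<in>S. \<Sum>b\<in>T. if a \<otimes>\<^bsub>M\<^esub> b = x then f a * g b else 0) =
          (\<Sum>b\<in>T. \<Sum>a\<in>S. if b \<otimes>\<^bsub>M\<^esub> a = x then g b * f a else 0)" .
    qed
    also have "\<dots> = g \<otimes>\<^bsub>?Z\<^esub> f"
      by (rule Zring_mult_eq[symmetric]) (use fin in \<open>auto simp: S_def T_def\<close>)
    finally show ?thesis .
  qed
  have lone: "\<one>\<^bsub>?Z\<^esub> \<otimes>\<^bsub>?Z\<^esub> f = f" if f: "f \<in> ?C" for f
  proof
    fix x
    define T where "T = {x. f x \<noteq> 0}"
    have fin: "finite T" using f by (auto simp: C T_def)
    have sub: "T \<subseteq> carrier M" using f by (auto simp: C T_def)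
    have "\<one>\<^bsub>?Z\<^esub> \<otimes>\<^bsub>?Z\<^esub> f = (\<lambda>x. \<Sum>a\<in>{\<one>\<^bsub>M\<^esub>}. \<Sum>b\<in>T. if a \<otimes>\<^bsub>M\<^esub> b = x then \<one>\<^bsub>?Z\<^esub> a * f b else 0)"
      by (rule Zring_mult_eq) (use fin in \<open>auto simp: T_def Zring_one\<close>)
    also have "\<dots> = (\<lambda>x. \<Sum>b\<in>T. if b = x then f b else 0)"
      using sub by (intro ext) (auto simp: Zring_def intro!: sum.cong)
    finally have "(\<one>\<^bsub>?Z\<^esub> \<otimes>\<^bsub>?Z\<^esub> f) x = (\<Sum>b\<in>T. if b = x then f b else 0)" by simp
    also have "\<dots> = f x" using fin by (simp add: sum.delta' T_def)
    finally show "(\<one>\<^bsub>?Z\<^esub> \<otimes>\<^bsub>?Z\<^esub> f) x = f x" .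
  qed
  have ldistr: "(f \<oplus>\<^bsub>?Z\<^esub> g) \<otimes>\<^bsub>?Z\<^esub> h = f \<otimes>\<^bsub>?Z\<^esub> h \<oplus>\<^bsub>?Z\<^esub> g \<otimes>\<^bsub>?Z\<^esub> h"
    if f: "f \<in> ?C" and g: "g \<in> ?C" and h: "h \<in> ?C" for f g h
  proof -
    define S where "S = {x. f x \<noteq> 0} \<union> {x. g x \<noteq> 0}"
    define T where "T = {x. h x \<noteq> 0}"
    have finS: "finite S" unfolding S_def by (intro finite_UnI) (use f g in \<open>simp_all add: C\<close>)
    have finT: "finite T" using h by (simp add: C T_def)
    note fin = finS finT
    have e1: "(f \<oplus>\<^bsub>?Z\<^esub> g) \<otimes>\<^bsub>?Z\<^esub> h = (\<lambda>x. \<Sum>a\<in>S. \<Sum>b\<in>T. if a \<otimes>\<^bsub>M\<^esub> b = x then (f a + g a) * h b else 0)"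
      unfolding Zring_add by (rule Zring_mult_eq) (rule finS, rule finT, auto simp: S_def T_def)
    have e2: "f \<otimes>\<^bsub>?Z\<^esub> h = (\<lambda>x. \<Sum>a\<in>S. \<Sum>b\<in>T. if a \<otimes>\<^bsub>M\<^esub> b = x then f a * h b else 0)"
      by (rule Zring_mult_eq) (rule finS, rule finT, auto simp: S_def T_def)
    have e3: "g \<otimes>\<^bsub>?Z\<^esub> h = (\<lambda>x. \<Sum>a\<in>S. \<Sum>b\<in>T. if a \<otimes>\<^bsub>M\<^esub> b = x then g a * h b else 0)"
      by (rule Zring_mult_eq) (rule finS, rule finT, auto simp: S_def T_def)
    show ?thesis unfolding e1 e2 e3 unfolding Zring_add
      apply (rule ext)
      apply (simp only: sum.distrib[symmetric])
      apply (intro sum.cong refl)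
      by (simp add: distrib_right)
  qed
  have ag: "abelian_group ?Z"
  proof (rule abelian_groupI)
    fix f g assume fg: "f \<in> ?C" "g \<in> ?C"
    have sub: "{x. f x + g x \<noteq> 0} \<subseteq> {x. f x \<noteq> 0} \<union> {x. g x \<noteq> 0}" by auto
    have "finite {x. f x + g x \<noteq> 0}" by (rule finite_subset[OF sub]) (use fg in \<open>simp add: C\<close>)
    then show "f \<oplus>\<^bsub>?Z\<^esub> g \<in> ?C" using sub fg by (auto simp: C)
  next
    show "\<zero>\<^bsub>?Z\<^esub> \<in> ?C" by (simp add: C)
  next
    fix f assume f: "f \<in> ?C"
    show "\<exists>y\<in>?C. y \<oplus>\<^bsub>?Z\<^esub> f = \<zero>\<^bsub>?Z\<^esub>"
      by (rule bexI[of _ "\<lambda>x. - f x"]) (use f in \<open>auto simp: C\<close>)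
  qed (auto intro!: ext)
  have cmZ: "comm_monoid ?Z"
    by (rule comm_monoidI) (blast intro: mclosed oneC assoc comm lone)+
  show ?thesis
    by (rule cringI[OF ag cmZ ldistr])
qed


declare Zring_add[simp del] Zring_zero[simp del]


definition md :: "'a multiset \<Rightarrow> 'a multiset \<Rightarrow> 'a \<Rightarrow> int" where
  "md Xm Y = (\<lambda>x. ms_int Xm x - ms_int Y x)"

lemma (in ring) ideal_from:
  assumes "I \<subseteq> carrier R" "\<zero> \<in> I" "\<And>a b. a \<in> I \<Longrightarrow> b \<in> I \<Longrightarrow> a \<oplus> b \<in> I"
    "\<And>a. a \<in> I \<Longrightarrow> \<ominus> a \<in> I"
    "\<And>a x. a \<in> I \<Longrightarrow> x \<in> carrier R \<Longrightarrow> x \<otimes> a \<in> I"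
    "\<And>a x. a \<in> I \<Longrightarrow> x \<in> carrier R \<Longrightarrow> a \<otimes> x \<in> I"
  shows "ideal I R"
  apply (rule idealI[OF ring_axioms])
    apply (rule add.subgroupI)
  using assms by (auto simp: a_inv_def)

lemma (in cring) ring_mult_diff: "a \<in> carrier R \<Longrightarrow> b \<in> carrier R \<Longrightarrow> c \<in> carrier R \<Longrightarrow> d \<in> carrier R \<Longrightarrow>
  (a \<ominus> b) \<otimes> (c \<ominus> d) = (a \<otimes> c \<oplus> b \<otimes> d) \<ominus> (a \<otimes> d \<oplus> b \<otimes> c)"
  by algebra

lemma set_mset_mset_mult: "set_mset Xm \<subseteq> carrier M \<Longrightarrow> set_mset Y \<subseteq> carrier M \<Longrightarrow> monoid M \<Longrightarrow>
   set_mset (mset_mult M Xm Y) \<subseteq> carrier M"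
  by (auto simp: mset_mult_def monoid.m_closed subset_iff)

lemma ms_int_carrier: "set_mset Xm \<subseteq> carrier M \<Longrightarrow> ms_int Xm \<in> carrier (Zring M)"
proof -
  assume a: "set_mset Xm \<subseteq> carrier M"
  have "{x. ms_int Xm x \<noteq> 0} = set_mset Xm" by (auto simp: ms_int_def not_in_iff[symmetric])
  then show ?thesis using a unfolding Zring_carrier mem_Collect_eq by auto
qed

lemma md_carrier: "set_mset Xm \<subseteq> carrier M \<Longrightarrow> set_mset Y \<subseteq> carrier M \<Longrightarrow> md Xm Y \<in> carrier (Zring M)"
proof -
  assume a: "set_mset Xm \<subseteq> carrier M" "set_mset Y \<subseteq> carrier M"
  have s: "{x. md Xm Y x \<noteq> 0} \<subseteq> set_mset Xm \<union> set_mset Y"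
  proof
    fix x assume "x \<in> {x. md Xm Y x \<noteq> 0}"
    then show "x \<in> set_mset Xm \<union> set_mset Y"
      by (cases "x \<in># Xm"; cases "x \<in># Y") (auto simp: md_def ms_int_def not_in_iff)
  qed
  then have "finite {x. md Xm Y x \<noteq> 0}" by (rule finite_subset) simp
  then show ?thesis using a s unfolding Zring_carrier by blast
qed

lemma ms_int_add: "ms_int (Xm + Y) = ms_int Xm \<oplus>\<^bsub>Zring M\<^esub> ms_int Y"
  by (auto simp: ms_int_def Zring_add)

lemma ms_int_empty: "ms_int {#} = \<zero>\<^bsub>Zring M\<^esub>"
  by (auto simp: ms_int_def Zring_zero)

lemma md_add: "md Xm Y \<oplus>\<^bsub>Zring M\<^esub> md Z W = md (Xm + Z) (Y + W)"
  by (auto simp: md_def ms_int_def Zring_add)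

lemma md_same: "md Xm Xm = \<zero>\<^bsub>Zring M\<^esub>"
  by (auto simp: md_def Zring_zero)

lemma ms_int_single_mult:
  assumes "set_mset Y \<subseteq> carrier M" "x \<in> carrier M"
  shows "ms_int (image_mset (\<lambda>y. x \<otimes>\<^bsub>M\<^esub> y) Y) = ms_int {#x#} \<otimes>\<^bsub>Zring M\<^esub> ms_int Y"
proof -
  have "ms_int {#x#} \<otimes>\<^bsub>Zring M\<^esub> ms_int Y
     = (\<lambda>z. \<Sum>a\<in>{x}. \<Sum>b\<in>set_mset Y. if a \<otimes>\<^bsub>M\<^esub> b = z then ms_int {#x#} a * ms_int Y b else 0)"
    by (rule Zring_mult_eq) (auto simp: ms_int_def)
  also have "\<dots> = (\<lambda>z. \<Sum>b\<in>set_mset Y. if x \<otimes>\<^bsub>M\<^esub> b = z then int (count Y b) else 0)"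
  proof -
    have sg: "\<And>F. sum F {x} = F x" by simp
    show ?thesis unfolding sg by (intro ext sum.cong refl) (simp add: ms_int_def)
  qed
  also have "\<dots> = ms_int (image_mset (\<lambda>y. x \<otimes>\<^bsub>M\<^esub> y) Y)"
  proof
    fix z
    have "int (count (image_mset (\<lambda>y. x \<otimes>\<^bsub>M\<^esub> y) Y) z)
        = int (\<Sum>y\<in>{b \<in> set_mset Y. x \<otimes>\<^bsub>M\<^esub> b = z}. count Y y)"
      unfolding count_image_mset by (intro arg_cong[where f=int] sum.cong) auto
    also have "\<dots> = (\<Sum>b\<in>{b \<in> set_mset Y. x \<otimes>\<^bsub>M\<^esub> b = z}. int (count Y b))" by simp
    also have "\<dots> = (\<Sum>b\<in>set_mset Y. if x \<otimes>\<^bsub>M\<^esub> b = z then int (count Y b) else 0)"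
      by (rule sum.inter_filter) simp
    finally show "(\<Sum>b\<in>set_mset Y. if x \<otimes>\<^bsub>M\<^esub> b = z then int (count Y b) else 0) =
        ms_int (image_mset (\<lambda>y. x \<otimes>\<^bsub>M\<^esub> y) Y) z" by (simp add: ms_int_def)
  qed
  finally show ?thesis by simp
qed

lemma ms_int_mult:
  assumes cm: "comm_monoid M" and Xm: "set_mset Xm \<subseteq> carrier M" and Y: "set_mset Y \<subseteq> carrier M"
  shows "ms_int (mset_mult M Xm Y) = ms_int Xm \<otimes>\<^bsub>Zring M\<^esub> ms_int Y"
  using Xm
proof (induction Xm)
  case empty
  interpret Z: cring "Zring M" by (rule Zring_cring[OF cm])
  have "mset_mult M {#} Y = {#}" by (simp add: mset_mult_def)
  then show ?case using Z.l_null[OF ms_int_carrier[OF Y]] by (simp add: ms_int_def Zring_zero)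
next
  case (add x Xm)
  interpret Z: cring "Zring M" by (rule Zring_cring[OF cm])
  have xc: "x \<in> carrier M" and Xc: "set_mset Xm \<subseteq> carrier M" using add.prems by auto
  have "mset_mult M (add_mset x Xm) Y = image_mset (\<lambda>y. x \<otimes>\<^bsub>M\<^esub> y) Y + mset_mult M Xm Y"
    by (simp add: mset_mult_def)
  then have "ms_int (mset_mult M (add_mset x Xm) Y)
      = ms_int {#x#} \<otimes>\<^bsub>Zring M\<^esub> ms_int Y \<oplus>\<^bsub>Zring M\<^esub> ms_int Xm \<otimes>\<^bsub>Zring M\<^esub> ms_int Y"
    using add.IH[OF Xc] ms_int_single_mult[OF Y xc] by (simp add: ms_int_add[of _ _ M])
  also have "\<dots> = (ms_int {#x#} \<oplus>\<^bsub>Zring M\<^esub> ms_int Xm) \<otimes>\<^bsub>Zring M\<^esub> ms_int Y"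
    by (rule Z.l_distr[symmetric]) (use xc Xc Y in \<open>auto intro: ms_int_carrier\<close>)
  also have "ms_int {#x#} \<oplus>\<^bsub>Zring M\<^esub> ms_int Xm = ms_int (add_mset x Xm)"
    using ms_int_add[of "{#x#}" Xm M] by simp
  finally show ?case .
qed

lemma Zring_neg:
  assumes cm: "comm_monoid M" and f: "f \<in> carrier (Zring M)"
  shows "\<ominus>\<^bsub>Zring M\<^esub> f = (\<lambda>x. - f x)"
proof -
  interpret Z: cring "Zring M" by (rule Zring_cring[OF cm])
  have c: "(\<lambda>x. - f x) \<in> carrier (Zring M)" using f by (simp add: Zring_carrier)
  show ?thesis by (rule Z.minus_equality[OF _ f c]) (auto simp: Zring_add Zring_zero)
qed

lemma Zring_minus:
  assumes cm: "comm_monoid M" and f: "f \<in> carrier (Zring M)" and g: "g \<in> carrier (Zring M)"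
  shows "f \<ominus>\<^bsub>Zring M\<^esub> g = (\<lambda>x. f x - g x)"
proof -
  interpret Z: cring "Zring M" by (rule Zring_cring[OF cm])
  show ?thesis using Zring_neg[OF cm g] by (simp add: Z.minus_eq Zring_add)
qed

lemma md_eq: "comm_monoid M \<Longrightarrow> set_mset Xm \<subseteq> carrier M \<Longrightarrow> set_mset Y \<subseteq> carrier M \<Longrightarrow>
   md Xm Y = ms_int Xm \<ominus>\<^bsub>Zring M\<^esub> ms_int Y"
  by (simp add: Zring_minus ms_int_carrier md_def)

lemma md_neg: assumes cm: "comm_monoid M" and c: "set_mset Xm \<subseteq> carrier M" "set_mset Y \<subseteq> carrier M"
  shows "\<ominus>\<^bsub>Zring M\<^esub> md Xm Y = md Y Xm"
  using Zring_neg[OF cm md_carrier[OF c]] by (simp add: md_def)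

lemma md_mult:
  assumes cm: "comm_monoid M" and c: "set_mset Xm \<subseteq> carrier M" "set_mset Y \<subseteq> carrier M"
    "set_mset Z \<subseteq> carrier M" "set_mset W \<subseteq> carrier M"
  shows "md Xm Y \<otimes>\<^bsub>Zring M\<^esub> md Z W
    = md (mset_mult M Xm Z + mset_mult M Y W) (mset_mult M Xm W + mset_mult M Y Z)"
proof -
  interpret Z: cring "Zring M" by (rule Zring_cring[OF cm])
  interpret M: comm_monoid M by (rule cm)
  have cs: "set_mset (mset_mult M Xm Z + mset_mult M Y W) \<subseteq> carrier M"
    "set_mset (mset_mult M Xm W + mset_mult M Y Z) \<subseteq> carrier M"
    using c set_mset_mset_mult[OF _ _ M.monoid_axioms] by auto
  have cc: "ms_int Xm \<in> carrier (Zring M)" "ms_int Y \<in> carrier (Zring M)"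
    "ms_int Z \<in> carrier (Zring M)" "ms_int W \<in> carrier (Zring M)"
    using c by (auto intro: ms_int_carrier)
  have "md Xm Y \<otimes>\<^bsub>Zring M\<^esub> md Z W = (ms_int Xm \<ominus>\<^bsub>Zring M\<^esub> ms_int Y) \<otimes>\<^bsub>Zring M\<^esub> (ms_int Z \<ominus>\<^bsub>Zring M\<^esub> ms_int W)"
    using c cm by (simp add: md_eq)
  also have "\<dots> = (ms_int Xm \<otimes>\<^bsub>Zring M\<^esub> ms_int Z \<oplus>\<^bsub>Zring M\<^esub> ms_int Y \<otimes>\<^bsub>Zring M\<^esub> ms_int W)
      \<ominus>\<^bsub>Zring M\<^esub> (ms_int Xm \<otimes>\<^bsub>Zring M\<^esub> ms_int W \<oplus>\<^bsub>Zring M\<^esub> ms_int Y \<otimes>\<^bsub>Zring M\<^esub> ms_int Z)"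
    using cc by (rule Z.ring_mult_diff)
  also have "\<dots> = md (mset_mult M Xm Z + mset_mult M Y W) (mset_mult M Xm W + mset_mult M Y Z)"
    using c cs cm by (simp add: md_eq ms_int_add[of _ _ M] ms_int_mult)
  finally show ?thesis .
qed

lemma Zring_decomp:
  assumes f: "f \<in> carrier (Zring M)"
  shows "\<exists>P N. set_mset P \<subseteq> carrier M \<and> set_mset N \<subseteq> carrier M \<and> f = md P N"
proof -
  define S where "S = {x. f x \<noteq> 0}"
  have fin: "finite S" and sub: "S \<subseteq> carrier M" using f by (auto simp: Zring_carrier S_def)
  define P where "P = (\<Sum>x\<in>S. replicate_mset (nat (f x)) x)"
  define N where "N = (\<Sum>x\<in>S. replicate_mset (nat (- f x)) x)"
  have cP: "count P y = (if y \<in> S then nat (f y) else 0)" for y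
    using fin by (simp add: P_def count_sum sum.delta')
  have cN: "count N y = (if y \<in> S then nat (- f y) else 0)" for y
    using fin by (simp add: N_def count_sum sum.delta')
  have "set_mset P \<subseteq> S" "set_mset N \<subseteq> S" by (auto simp: set_mset_def cP cN split: if_splits)
  moreover have "f = md P N"
    by (rule ext) (auto simp: md_def ms_int_def cP cN S_def)
  ultimately show ?thesis using sub by blast
qed

lemma IR_ideal:
  assumes bp: "blueprint M R"
  shows "ideal (IR R) (Zring M)"
proof -
  have cm: "comm_monoid M" and pa: "pre_addition M R" using bp by (auto simp: blueprint_def)
  interpret Z: cring "Zring M" by (rule Zring_cring[OF cm])
  have eq: "equiv (NA M) R" and cl: "\<And>Xa Ya Z W. (Xa,Ya) \<in> R \<Longrightarrow> (Z,W) \<in> R \<Longrightarrow>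
        (Xa + Z, Ya + W) \<in> R \<and> (mset_mult M Xa Z, mset_mult M Ya W) \<in> R"
    using pa by (auto simp: pre_addition_def)
  have RNA: "R \<subseteq> NA M \<times> NA M" and refl: "\<And>Xm. Xm \<in> NA M \<Longrightarrow> (Xm,Xm) \<in> R" and sym: "\<And>Xm Y. (Xm,Y) \<in> R \<Longrightarrow> (Y,Xm) \<in> R"
    using eq by (auto simp: equiv_def refl_on_def sym_def)
  have IR: "IR R = {md Xm Y | Xm Y. (Xm,Y) \<in> R}" by (simp add: IR_def md_def)
  have Rc2: "set_mset Xm \<subseteq> carrier M \<and> set_mset Y \<subseteq> carrier M" if "(Xm,Y) \<in> R" for Xm Y
    using RNA that by (auto simp: NA_def)
  have Rc: "set_mset Xm \<subseteq> carrier M" "set_mset Y \<subseteq> carrier M" if "(Xm,Y) \<in> R" for Xm Y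
    using Rc2[OF that] by auto
  have left: "x \<otimes>\<^bsub>Zring M\<^esub> a \<in> IR R" if a: "a \<in> IR R" and x: "x \<in> carrier (Zring M)" for a x
  proof -
    obtain Xm Y where XY: "(Xm,Y) \<in> R" and aeq: "a = md Xm Y" using a by (auto simp: IR)
    obtain P N where P: "set_mset P \<subseteq> carrier M" and N: "set_mset N \<subseteq> carrier M" and xeq: "x = md P N"
      using Zring_decomp[OF x] by blast
    have PP: "(P,P) \<in> R" and NN: "(N,N) \<in> R" using P N refl by (auto simp: NA_def)
    have "(mset_mult M P Xm + mset_mult M N Y, mset_mult M P Y + mset_mult M N Xm) \<in> R"
    proof -
      have "(mset_mult M P Xm, mset_mult M P Y) \<in> R" using cl[OF PP XY] by blast
      moreover have "(mset_mult M N Y, mset_mult M N Xm) \<in> R" using cl[OF NN sym[OF XY]] by blast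
      ultimately show ?thesis using cl by blast
    qed
    moreover have "x \<otimes>\<^bsub>Zring M\<^esub> a = md (mset_mult M P Xm + mset_mult M N Y) (mset_mult M P Y + mset_mult M N Xm)"
      unfolding xeq aeq by (rule md_mult[OF cm P N Rc[OF XY]])
    ultimately show ?thesis unfolding IR by blast
  qed
  show ?thesis
  proof (rule Z.ideal_from)
    show "IR R \<subseteq> carrier (Zring M)" by (auto simp: IR intro!: md_carrier dest: Rc2)
  next
    have "({#},{#}) \<in> R" using refl by (simp add: NA_def)
    moreover have "\<zero>\<^bsub>Zring M\<^esub> = md {#} {#}" by (rule md_same[symmetric])
    ultimately show "\<zero>\<^bsub>Zring M\<^esub> \<in> IR R" unfolding IR by blast
  next
    fix a b assume a: "a \<in> IR R" and b: "b \<in> IR R"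
    obtain X1 Y1 where XY1: "(X1,Y1) \<in> R" and aeq: "a = md X1 Y1" using a by (auto simp: IR)
    obtain X2 Y2 where XY2: "(X2,Y2) \<in> R" and beq: "b = md X2 Y2" using b by (auto simp: IR)
    have "a \<oplus>\<^bsub>Zring M\<^esub> b = md (X1 + X2) (Y1 + Y2)" unfolding aeq beq by (rule md_add)
    moreover have "(X1 + X2, Y1 + Y2) \<in> R" using cl[OF XY1 XY2] by blast
    ultimately show "a \<oplus>\<^bsub>Zring M\<^esub> b \<in> IR R" unfolding IR by blast
  next
    fix a assume "a \<in> IR R"
    then obtain Xm Y where XY: "(Xm,Y) \<in> R" and aeq: "a = md Xm Y" by (auto simp: IR)
    have "\<ominus>\<^bsub>Zring M\<^esub> a = md Y Xm" unfolding aeq by (rule md_neg[OF cm Rc[OF XY]])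
    then show "\<ominus>\<^bsub>Zring M\<^esub> a \<in> IR R" using sym[OF XY] by (auto simp: IR)
  next
    fix a x assume "a \<in> IR R" "x \<in> carrier (Zring M)"
    then show "x \<otimes>\<^bsub>Zring M\<^esub> a \<in> IR R" by (rule left)
  next
    fix a x assume a: "a \<in> IR R" and x: "x \<in> carrier (Zring M)"
    have "a \<in> carrier (Zring M)" using a by (auto simp: IR intro!: md_carrier dest: Rc2)
    then have "a \<otimes>\<^bsub>Zring M\<^esub> x = x \<otimes>\<^bsub>Zring M\<^esub> a" using x by (simp add: Z.m_comm)
    then show "a \<otimes>\<^bsub>Zring M\<^esub> x \<in> IR R" using left[OF a x] by simp
  qed
qed


declare Zring_add[simp del] Zring_zero[simp del]

lemma equiv_gen_sub: "G \<subseteq> equiv_gen U G"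
  by (auto simp: equiv_gen_def)

lemma equiv_gen_least: "equiv U S \<Longrightarrow> G \<subseteq> S \<Longrightarrow> equiv_gen U G \<subseteq> S"
  by (auto simp: equiv_gen_def)

lemma mset_mult_single: "mset_mult M {#a#} {#b#} = {#a \<otimes>\<^bsub>M\<^esub> b#}"
  by (simp add: mset_mult_def)

locale bpc =
  fixes M :: "('a,'b) monoid_scheme" and R and r
  assumes bp: "blueprint M R" and cg: "bp_congruence M R r"
begin

abbreviation "cls a \<equiv> r `` {a}"
abbreviation "QM \<equiv> quot_monoid M r"

lemma cm: "comm_monoid M" using bp by (simp add: blueprint_def)
lemma eqr: "equiv (carrier M) r" using cg by (simp add: bp_congruence_def)

lemma r_sub: "(a,b) \<in> r \<Longrightarrow> a \<in> carrier M \<and> b \<in> carrier M"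
proof -
  assume "(a,b) \<in> r"
  moreover have "r \<subseteq> carrier M \<times> carrier M" using eqr by (rule equivE)
  ultimately show ?thesis by blast
qed

lemma single_lin_ext:
  assumes "(a,b) \<in> r"
  shows "({#a#},{#b#}) \<in> lin_ext M r"
proof -
  have "(mset [a], mset [b]) \<in> {(mset xs, mset ys) | xs ys. set xs \<subseteq> carrier M \<and> set ys \<subseteq> carrier M \<and>
                                 list_all2 (\<lambda>a b. (a,b) \<in> r) xs ys}"
    unfolding mem_Collect_eq
    by (rule exI[of _ "[a]"], rule exI[of _ "[b]"]) (use assms r_sub[OF assms] in simp)
  then have "(mset [a], mset [b]) \<in> lin_ext M r" unfolding lin_ext_def by (rule subsetD[OF equiv_gen_sub])
  then show ?thesis by simp
qed

lemma lin_ext_sim_R: "lin_ext M r \<subseteq> sim_R M R r"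
  unfolding sim_R_def by (rule order_trans[OF _ equiv_gen_sub]) (rule Un_upper2)

lemma sim_R_r: "a \<in> carrier M \<Longrightarrow> b \<in> carrier M \<Longrightarrow> ({#a#},{#b#}) \<in> sim_R M R r \<Longrightarrow> (a,b) \<in> r"
proof -
  assume "a \<in> carrier M" "b \<in> carrier M" "({#a#},{#b#}) \<in> sim_R M R r"
  then have "(a,b) \<in> {(a,b). a \<in> carrier M \<and> b \<in> carrier M \<and> ({#a#},{#b#}) \<in> sim_R M R r}" by simp
  also have "\<dots> = r" using cg by (simp add: bp_congruence_def)
  finally show ?thesis .
qed

lemma r_cong:
  assumes "(a,a') \<in> r" "(b,b') \<in> r"
  shows "(a \<otimes>\<^bsub>M\<^esub> b, a' \<otimes>\<^bsub>M\<^esub> b') \<in> r"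
proof -
  interpret M: comm_monoid M by (rule cm)
  have pa: "pre_addition M (lin_ext M r)" using cg by (simp add: bp_congruence_def)
  have "(mset_mult M {#a#} {#b#}, mset_mult M {#a'#} {#b'#}) \<in> lin_ext M r"
    using pa single_lin_ext[OF assms(1)] single_lin_ext[OF assms(2)] unfolding pre_addition_def by blast
  then have "({#a \<otimes>\<^bsub>M\<^esub> b#}, {#a' \<otimes>\<^bsub>M\<^esub> b'#}) \<in> sim_R M R r"
    unfolding mset_mult_single using lin_ext_sim_R by blast
  moreover have "a \<otimes>\<^bsub>M\<^esub> b \<in> carrier M" "a' \<otimes>\<^bsub>M\<^esub> b' \<in> carrier M"
    using r_sub[OF assms(1)] r_sub[OF assms(2)] by auto
  ultimately show ?thesis using sim_R_r by blast
qed

lemma cls_eq_iff: "a \<in> carrier M \<Longrightarrow> b \<in> carrier M \<Longrightarrow> cls a = cls b \<longleftrightarrow> (a,b) \<in> r"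
  using eq_equiv_class_iff[OF eqr] by blast

lemma in_class_iff: "Q \<in> carrier M // r \<Longrightarrow> x \<in> carrier M \<Longrightarrow> x \<in> Q \<longleftrightarrow> cls x = Q"
proof -
  assume Q: "Q \<in> carrier M // r" and x: "x \<in> carrier M"
  obtain q where q: "q \<in> carrier M" "Q = cls q" using Q by (auto elim!: quotientE)
  have "x \<in> Q \<longleftrightarrow> (q,x) \<in> r" using q by simp
  also have "\<dots> \<longleftrightarrow> cls q = cls x" using cls_eq_iff[OF q(1) x] by simp
  finally show ?thesis using q by auto
qed

lemma class_sub: "Q \<in> carrier M // r \<Longrightarrow> Q \<subseteq> carrier M"
proof -
  assume Q: "Q \<in> carrier M // r"
  obtain q where q: "q \<in> carrier M" "Q = cls q" using Q by (auto elim!: quotientE)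
  show ?thesis unfolding q(2) using r_sub by blast
qed

lemma qm_mult: "a \<in> carrier M \<Longrightarrow> b \<in> carrier M \<Longrightarrow> cls a \<otimes>\<^bsub>QM\<^esub> cls b = cls (a \<otimes>\<^bsub>M\<^esub> b)"
proof -
  assume a: "a \<in> carrier M" and b: "b \<in> carrier M"
  have "r `` ((\<lambda>(x,y). x \<otimes>\<^bsub>M\<^esub> y) ` (cls a \<times> cls b)) = cls (a \<otimes>\<^bsub>M\<^esub> b)"
  proof
    show "r `` ((\<lambda>(x,y). x \<otimes>\<^bsub>M\<^esub> y) ` (cls a \<times> cls b)) \<subseteq> cls (a \<otimes>\<^bsub>M\<^esub> b)"
    proof
      fix z assume "z \<in> r `` ((\<lambda>(x,y). x \<otimes>\<^bsub>M\<^esub> y) ` (cls a \<times> cls b))"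
      then obtain x y where xy: "(a,x) \<in> r" "(b,y) \<in> r" and z: "(x \<otimes>\<^bsub>M\<^esub> y, z) \<in> r" by auto
      have "(a \<otimes>\<^bsub>M\<^esub> b, x \<otimes>\<^bsub>M\<^esub> y) \<in> r" by (rule r_cong[OF xy])
      then have "(a \<otimes>\<^bsub>M\<^esub> b, z) \<in> r" using z eqr by (auto simp: equiv_def trans_def)
      then show "z \<in> cls (a \<otimes>\<^bsub>M\<^esub> b)" by simp
    qed
  next
    have "a \<in> cls a" "b \<in> cls b" using equiv_class_self[OF eqr a] equiv_class_self[OF eqr b] by auto
    then show "cls (a \<otimes>\<^bsub>M\<^esub> b) \<subseteq> r `` ((\<lambda>(x,y). x \<otimes>\<^bsub>M\<^esub> y) ` (cls a \<times> cls b))" by blast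
  qed
  then show ?thesis by (simp add: quot_monoid_def)
qed

lemma qm_one: "\<one>\<^bsub>QM\<^esub> = cls \<one>\<^bsub>M\<^esub>" by (simp add: quot_monoid_def)
lemma qm_carrier: "carrier QM = carrier M // r" by (simp add: quot_monoid_def)

lemma qm_cm: "comm_monoid QM"
proof -
  interpret M: comm_monoid M by (rule cm)
  show ?thesis
  proof (rule comm_monoidI)
    fix x y assume "x \<in> carrier QM" "y \<in> carrier QM"
    then obtain a b where "a \<in> carrier M" "b \<in> carrier M" "x = cls a" "y = cls b"
      by (auto simp: qm_carrier elim!: quotientE)
    then show "x \<otimes>\<^bsub>QM\<^esub> y \<in> carrier QM" by (simp add: qm_mult qm_carrier quotientI)
  next
    show "\<one>\<^bsub>QM\<^esub> \<in> carrier QM" by (simp add: qm_one qm_carrier quotientI)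
  next
    fix x y z assume "x \<in> carrier QM" "y \<in> carrier QM" "z \<in> carrier QM"
    then obtain a b c where "a \<in> carrier M" "b \<in> carrier M" "c \<in> carrier M" "x = cls a" "y = cls b" "z = cls c"
      by (auto simp: qm_carrier elim!: quotientE)
    then show "x \<otimes>\<^bsub>QM\<^esub> y \<otimes>\<^bsub>QM\<^esub> z = x \<otimes>\<^bsub>QM\<^esub> (y \<otimes>\<^bsub>QM\<^esub> z)" by (simp add: qm_mult M.m_assoc)
  next
    fix x assume "x \<in> carrier QM"
    then obtain a where "a \<in> carrier M" "x = cls a" by (auto simp: qm_carrier elim!: quotientE)
    then show "\<one>\<^bsub>QM\<^esub> \<otimes>\<^bsub>QM\<^esub> x = x" by (simp add: qm_mult qm_one)
  next
    fix x y assume "x \<in> carrier QM" "y \<in> carrier QM"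
    then obtain a b where "a \<in> carrier M" "b \<in> carrier M" "x = cls a" "y = cls b"
      by (auto simp: qm_carrier elim!: quotientE)
    then show "x \<otimes>\<^bsub>QM\<^esub> y = y \<otimes>\<^bsub>QM\<^esub> x" by (simp add: qm_mult M.m_comm)
  qed
qed

end


context bpc begin

abbreviation "ZQ \<equiv> Zring QM"

lemma zpush_eq:
  assumes S: "finite S" "{x. f x \<noteq> 0} \<subseteq> S" "S \<subseteq> carrier M" and Q: "Q \<in> carrier M // r"
  shows "zpush M r f Q = (\<Sum>x\<in>{x\<in>S. cls x = Q}. f x)"
proof -
  have "zpush M r f Q = (\<Sum>x\<in>{x\<in>Q. f x \<noteq> 0}. f x)" using Q by (simp add: zpush_def)
  also have "\<dots> = (\<Sum>x\<in>{x\<in>S. cls x = Q}. f x)"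
  proof (rule sum.mono_neutral_left)
    show "finite {x\<in>S. cls x = Q}" using S(1) by simp
    show "{x\<in>Q. f x \<noteq> 0} \<subseteq> {x\<in>S. cls x = Q}"
    proof
      fix x assume x: "x \<in> {x\<in>Q. f x \<noteq> 0}"
      then have xS: "x \<in> S" using S(2) by blast
      then have xc: "x \<in> carrier M" using S(3) by blast
      have "x \<in> Q" using x by blast
      then have "cls x = Q" using in_class_iff[OF Q xc] by simp
      then show "x \<in> {x\<in>S. cls x = Q}" using xS by simp
    qed
    show "\<forall>i\<in>{x\<in>S. cls x = Q} - {x\<in>Q. f x \<noteq> 0}. f i = 0"
    proof
      fix i assume i: "i \<in> {x\<in>S. cls x = Q} - {x\<in>Q. f x \<noteq> 0}"
      then have ic: "i \<in> carrier M" using S(3) by blast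
      have "cls i = Q" using i by blast
      then have "i \<in> Q" using in_class_iff[OF Q ic] by simp
      then show "f i = 0" using i by blast
    qed
  qed
  finally show ?thesis .
qed

lemma zpush_out: "Q \<notin> carrier M // r \<Longrightarrow> zpush M r f Q = 0"
  by (simp add: zpush_def)

lemma ZQ_carrier: "carrier ZQ = {f. finite {x. f x \<noteq> 0} \<and> {x. f x \<noteq> 0} \<subseteq> carrier M // r}"
  by (simp add: Zring_carrier qm_carrier)

lemma ZQ_out: "h \<in> carrier ZQ \<Longrightarrow> Q \<notin> carrier M // r \<Longrightarrow> h Q = 0"
  unfolding ZQ_carrier by blast

lemma zpush_supp:
  assumes f: "f \<in> carrier (Zring M)"
  shows "{Q. zpush M r f Q \<noteq> 0} \<subseteq> cls ` {x. f x \<noteq> 0}"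
proof
  fix Q assume "Q \<in> {Q. zpush M r f Q \<noteq> 0}"
  then have nz: "zpush M r f Q \<noteq> 0" by simp
  then have Q: "Q \<in> carrier M // r" using zpush_out by blast
  have fin: "finite {x. f x \<noteq> 0}" and sub: "{x. f x \<noteq> 0} \<subseteq> carrier M" using f by (auto simp: Zring_carrier)
  have eq: "zpush M r f Q = (\<Sum>x\<in>{x\<in>{x. f x \<noteq> 0}. cls x = Q}. f x)"
    by (rule zpush_eq[OF fin order.refl sub Q])
  have "{x\<in>{x. f x \<noteq> 0}. cls x = Q} \<noteq> {}"
  proof
    assume "{x\<in>{x. f x \<noteq> 0}. cls x = Q} = {}"
    then have "zpush M r f Q = 0" unfolding eq by (simp only: sum.empty)
    with nz show False by simp
  qed
  then obtain x where x: "x \<in> {x\<in>{x. f x \<noteq> 0}. cls x = Q}" by (meson ex_in_conv)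
  show "Q \<in> cls ` {x. f x \<noteq> 0}" by (rule image_eqI[of _ _ x]) (use x in simp_all)
qed

lemma zpush_carrier:
  assumes f: "f \<in> carrier (Zring M)"
  shows "zpush M r f \<in> carrier ZQ"
proof -
  have fin: "finite {x. f x \<noteq> 0}" and sub: "{x. f x \<noteq> 0} \<subseteq> carrier M" using f by (auto simp: Zring_carrier)
  have s1: "cls ` {x. f x \<noteq> 0} \<subseteq> carrier M // r" using sub by (auto intro: quotientI)
  have "finite (cls ` {x. f x \<noteq> 0})" using fin by simp
  then have "finite {Q. zpush M r f Q \<noteq> 0}" by (rule finite_subset[OF zpush_supp[OF f]])
  moreover have "{Q. zpush M r f Q \<noteq> 0} \<subseteq> carrier M // r" using zpush_supp[OF f] s1 by (rule order_trans)
  ultimately show ?thesis unfolding ZQ_carrier by simp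
qed

lemma zpush_add:
  assumes f: "f \<in> carrier (Zring M)" and g: "g \<in> carrier (Zring M)"
  shows "zpush M r (f \<oplus>\<^bsub>Zring M\<^esub> g) = zpush M r f \<oplus>\<^bsub>ZQ\<^esub> zpush M r g"
proof
  fix Q
  show "zpush M r (f \<oplus>\<^bsub>Zring M\<^esub> g) Q = (zpush M r f \<oplus>\<^bsub>ZQ\<^esub> zpush M r g) Q"
  proof (cases "Q \<in> carrier M // r")
    case False
    then show ?thesis by (simp add: zpush_out Zring_add)
  next
    case Q: True
    define S where "S = {x. f x \<noteq> 0} \<union> {x. g x \<noteq> 0}"
    have fin: "finite S" using f g by (auto simp: Zring_carrier S_def)
    have sub: "S \<subseteq> carrier M" using f g by (auto simp: Zring_carrier S_def)
    have e1: "zpush M r (f \<oplus>\<^bsub>Zring M\<^esub> g) Q = (\<Sum>x\<in>{x\<in>S. cls x = Q}. f x + g x)"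
      unfolding Zring_add by (rule zpush_eq[OF fin _ sub Q]) (auto simp: S_def)
    have e2: "zpush M r f Q = (\<Sum>x\<in>{x\<in>S. cls x = Q}. f x)"
      by (rule zpush_eq[OF fin _ sub Q]) (auto simp: S_def)
    have e3: "zpush M r g Q = (\<Sum>x\<in>{x\<in>S. cls x = Q}. g x)"
      by (rule zpush_eq[OF fin _ sub Q]) (auto simp: S_def)
    show ?thesis unfolding e1 unfolding Zring_add e2 e3 by (simp add: sum.distrib)
  qed
qed

lemma zpush_one: "zpush M r \<one>\<^bsub>Zring M\<^esub> = \<one>\<^bsub>ZQ\<^esub>"
proof
  fix Q
  interpret M: comm_monoid M by (rule cm)
  have oneq: "cls \<one>\<^bsub>M\<^esub> \<in> carrier M // r" by (simp add: quotientI)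
  show "zpush M r \<one>\<^bsub>Zring M\<^esub> Q = \<one>\<^bsub>ZQ\<^esub> Q"
  proof (cases "Q \<in> carrier M // r")
    case False
    then have "Q \<noteq> cls \<one>\<^bsub>M\<^esub>" using oneq by blast
    then show ?thesis using False by (simp add: zpush_out Zring_one qm_one)
  next
    case Q: True
    have "zpush M r \<one>\<^bsub>Zring M\<^esub> Q = (\<Sum>x\<in>{x\<in>{\<one>\<^bsub>M\<^esub>}. cls x = Q}. \<one>\<^bsub>Zring M\<^esub> x)"
      by (rule zpush_eq[OF _ _ _ Q]) (auto simp: Zring_one)
    also have "\<dots> = (if cls \<one>\<^bsub>M\<^esub> = Q then 1 else 0)"
    proof (cases "cls \<one>\<^bsub>M\<^esub> = Q")
      case True
      have e: "{x\<in>{\<one>\<^bsub>M\<^esub>}. cls x = Q} = {\<one>\<^bsub>M\<^esub>}" using True by auto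
      show ?thesis unfolding e using True by (simp add: Zring_one)
    next
      case False
      have e: "{x\<in>{\<one>\<^bsub>M\<^esub>}. cls x = Q} = {}" using False by auto
      show ?thesis unfolding e using False by simp
    qed
    also have "\<dots> = \<one>\<^bsub>ZQ\<^esub> Q" by (auto simp: Zring_one qm_one)
    finally show ?thesis .
  qed
qed

lemma zpush_mult:
  assumes f: "f \<in> carrier (Zring M)" and g: "g \<in> carrier (Zring M)"
  shows "zpush M r (f \<otimes>\<^bsub>Zring M\<^esub> g) = zpush M r f \<otimes>\<^bsub>ZQ\<^esub> zpush M r g"
proof
  fix Q
  interpret M: comm_monoid M by (rule cm)
  interpret Z: cring "Zring M" by (rule Zring_cring[OF cm])
  interpret ZQr: cring ZQ by (rule Zring_cring[OF qm_cm])
  have c1: "zpush M r (f \<otimes>\<^bsub>Zring M\<^esub> g) \<in> carrier ZQ" by (rule zpush_carrier) (simp add: f g)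
  have c2: "zpush M r f \<otimes>\<^bsub>ZQ\<^esub> zpush M r g \<in> carrier ZQ"
    by (intro ZQr.m_closed zpush_carrier f g)
  show "zpush M r (f \<otimes>\<^bsub>Zring M\<^esub> g) Q = (zpush M r f \<otimes>\<^bsub>ZQ\<^esub> zpush M r g) Q"
  proof (cases "Q \<in> carrier M // r")
    case False
    then show ?thesis using ZQ_out[OF c1 False] ZQ_out[OF c2 False] by simp
  next
    case Q: True
    define S where "S = {x. f x \<noteq> 0}"
    define T where "T = {x. g x \<noteq> 0}"
    define V where "V = (\<lambda>(a,b). a \<otimes>\<^bsub>M\<^esub> b) ` (S \<times> T)"
    have finS: "finite S" and subS: "S \<subseteq> carrier M" using f by (auto simp: Zring_carrier S_def)
    have finT: "finite T" and subT: "T \<subseteq> carrier M" using g by (auto simp: Zring_carrier T_def)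
    have finV: "finite V" using finS finT by (simp add: V_def)
    have subV: "V \<subseteq> carrier M" using subS subT by (auto simp: V_def)
    have fg: "f \<otimes>\<^bsub>Zring M\<^esub> g = (\<lambda>x. \<Sum>a\<in>S. \<Sum>b\<in>T. if a \<otimes>\<^bsub>M\<^esub> b = x then f a * g b else 0)"
      by (rule Zring_mult_eq[OF finS finT]) (simp_all add: S_def T_def)
    have LHS: "zpush M r (f \<otimes>\<^bsub>Zring M\<^esub> g) Q
        = (\<Sum>a\<in>S. \<Sum>b\<in>T. if cls (a \<otimes>\<^bsub>M\<^esub> b) = Q then f a * g b else 0)"
    proof -
      have "zpush M r (f \<otimes>\<^bsub>Zring M\<^esub> g) Q = (\<Sum>x\<in>{x\<in>V. cls x = Q}. (f \<otimes>\<^bsub>Zring M\<^esub> g) x)"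
        by (rule zpush_eq[OF finV _ subV Q]) (use Zring_mult_supp[OF f g] in \<open>simp add: V_def S_def T_def\<close>)
      also have "\<dots> = (\<Sum>x\<in>V. if cls x = Q then (f \<otimes>\<^bsub>Zring M\<^esub> g) x else 0)"
        by (rule sum.inter_filter[OF finV])
      also have "\<dots> = (\<Sum>x\<in>V. \<Sum>a\<in>S. \<Sum>b\<in>T. if a \<otimes>\<^bsub>M\<^esub> b = x \<and> cls x = Q then f a * g b else 0)"
      proof (rule sum.cong[OF refl])
        fix x assume "x \<in> V"
        show "(if cls x = Q then (f \<otimes>\<^bsub>Zring M\<^esub> g) x else 0) =
            (\<Sum>a\<in>S. \<Sum>b\<in>T. if a \<otimes>\<^bsub>M\<^esub> b = x \<and> cls x = Q then f a * g b else 0)"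
          by (cases "cls x = Q") (simp_all add: fg)
      qed
      also have "\<dots> = (\<Sum>a\<in>S. \<Sum>b\<in>T. \<Sum>x\<in>V. if a \<otimes>\<^bsub>M\<^esub> b = x \<and> cls x = Q then f a * g b else 0)"
        by (rule sum3_swap)
      also have "\<dots> = (\<Sum>a\<in>S. \<Sum>b\<in>T. if cls (a \<otimes>\<^bsub>M\<^esub> b) = Q then f a * g b else 0)"
      proof (intro sum.cong refl)
        fix a b assume "a \<in> S" "b \<in> T"
        then have "a \<otimes>\<^bsub>M\<^esub> b \<in> V" by (auto simp: V_def)
        then show "(\<Sum>x\<in>V. if a \<otimes>\<^bsub>M\<^esub> b = x \<and> cls x = Q then f a * g b else 0)
            = (if cls (a \<otimes>\<^bsub>M\<^esub> b) = Q then f a * g b else 0)"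
          by (rule sum_if_eq_conj[OF finV])
      qed
      finally show ?thesis .
    qed
    define S' where "S' = cls ` S"
    define T' where "T' = cls ` T"
    have finS': "finite S'" using finS by (simp add: S'_def)
    have finT': "finite T'" using finT by (simp add: T'_def)
    have S'q: "S' \<subseteq> carrier M // r" using subS by (auto simp: S'_def intro: quotientI)
    have T'q: "T' \<subseteq> carrier M // r" using subT by (auto simp: T'_def intro: quotientI)
    have zf: "zpush M r f P1 = (\<Sum>a\<in>{a\<in>S. cls a = P1}. f a)" if "P1 \<in> S'" for P1
      by (rule zpush_eq[OF finS _ subS]) (use that S'q in \<open>auto simp: S_def\<close>)
    have zg: "zpush M r g P2 = (\<Sum>b\<in>{b\<in>T. cls b = P2}. g b)" if "P2 \<in> T'" for P2
      by (rule zpush_eq[OF finT _ subT]) (use that T'q in \<open>auto simp: T_def\<close>)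
    have zfg: "zpush M r f \<otimes>\<^bsub>ZQ\<^esub> zpush M r g = (\<lambda>P. \<Sum>P1\<in>S'. \<Sum>P2\<in>T'.
        if P1 \<otimes>\<^bsub>QM\<^esub> P2 = P then zpush M r f P1 * zpush M r g P2 else 0)"
      by (rule Zring_mult_eq[OF finS' finT'])
         (use zpush_supp[OF f] zpush_supp[OF g] in \<open>simp_all add: S'_def T'_def S_def T_def\<close>)
    define H where "H = (\<lambda>a b. if cls (a \<otimes>\<^bsub>M\<^esub> b) = Q then f a * g b else 0)"
    have "(zpush M r f \<otimes>\<^bsub>ZQ\<^esub> zpush M r g) Q = (\<Sum>P1\<in>S'. \<Sum>P2\<in>T'.
        if P1 \<otimes>\<^bsub>QM\<^esub> P2 = Q then zpush M r f P1 * zpush M r g P2 else 0)"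
      by (simp add: zfg)
    also have "\<dots> = (\<Sum>P1\<in>S'. \<Sum>P2\<in>T'. \<Sum>a\<in>{a\<in>S. cls a = P1}. \<Sum>b\<in>{b\<in>T. cls b = P2}. H a b)"
    proof (intro sum.cong refl)
      fix P1 P2 assume P1: "P1 \<in> S'" and P2: "P2 \<in> T'"
      have "(\<Sum>a\<in>{a\<in>S. cls a = P1}. \<Sum>b\<in>{b\<in>T. cls b = P2}. H a b)
          = (\<Sum>a\<in>{a\<in>S. cls a = P1}. \<Sum>b\<in>{b\<in>T. cls b = P2}. if P1 \<otimes>\<^bsub>QM\<^esub> P2 = Q then f a * g b else 0)"
      proof (intro sum.cong refl)
        fix a b assume a: "a \<in> {a\<in>S. cls a = P1}" and b: "b \<in> {b\<in>T. cls b = P2}"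
        have ac: "a \<in> carrier M" and bc: "b \<in> carrier M" using a b subS subT by auto
        have "P1 = cls a" "P2 = cls b" using a b by auto
        then have "cls (a \<otimes>\<^bsub>M\<^esub> b) = P1 \<otimes>\<^bsub>QM\<^esub> P2"
          using qm_mult[OF ac bc] by simp
        then show "H a b = (if P1 \<otimes>\<^bsub>QM\<^esub> P2 = Q then f a * g b else 0)" by (simp add: H_def)
      qed
      also have "\<dots> = (if P1 \<otimes>\<^bsub>QM\<^esub> P2 = Q then zpush M r f P1 * zpush M r g P2 else 0)"
        by (simp add: zf[OF P1] zg[OF P2] sum_product)
      finally show "(if P1 \<otimes>\<^bsub>QM\<^esub> P2 = Q then zpush M r f P1 * zpush M r g P2 else 0)
          = (\<Sum>a\<in>{a\<in>S. cls a = P1}. \<Sum>b\<in>{b\<in>T. cls b = P2}. H a b)" by simp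
    qed
    also have "\<dots> = (\<Sum>P1\<in>S'. \<Sum>a\<in>{a\<in>S. cls a = P1}. \<Sum>P2\<in>T'. \<Sum>b\<in>{b\<in>T. cls b = P2}. H a b)"
      by (rule sum.cong[OF refl], rule sum.swap)
    also have "\<dots> = (\<Sum>P1\<in>S'. \<Sum>a\<in>{a\<in>S. cls a = P1}. \<Sum>b\<in>T. H a b)"
      unfolding T'_def by (simp only: sum.image_gen[OF finT, symmetric])
    also have "\<dots> = (\<Sum>a\<in>S. \<Sum>b\<in>T. H a b)"
      unfolding S'_def by (simp only: sum.image_gen[OF finS, symmetric])
    finally show ?thesis using LHS by (simp add: H_def)
  qed
qed

end


lemma mset_match:
  "image_mset h P = image_mset h N \<Longrightarrow>
   \<exists>xs ys. mset xs = P \<and> mset ys = N \<and> list_all2 (\<lambda>a b. h a = h b) xs ys"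
proof (induction P arbitrary: N)
  case empty
  then have "N = {#}" by simp
  then show ?case by (intro exI[of _ "[]"]) simp
next
  case (add a P)
  have "h a \<in># image_mset h N" using add.prems by (metis image_mset_add_mset union_single_eq_member)
  then obtain b where b: "b \<in># N" "h b = h a" by auto
  define N' where "N' = N - {#b#}"
  have N: "N = add_mset b N'" using b(1) by (simp add: N'_def)
  have "add_mset (h a) (image_mset h P) = add_mset (h b) (image_mset h N')"
    using add.prems by (simp add: N)
  then have "image_mset h P = image_mset h N'" using b(2) by simp
  then obtain xs ys where "mset xs = P" "mset ys = N'" "list_all2 (\<lambda>a b. h a = h b) xs ys"
    using add.IH by blast
  then show ?case using b(2) N by (intro exI[of _ "a # xs"] exI[of _ "b # ys"]) auto
qed

context bpc begin

definition "Dr = {md (mset xs) (mset ys) | xs ys. list_all2 (\<lambda>a b. (a,b) \<in> r) xs ys}"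

lemma l2_carrier: "list_all2 (\<lambda>a b. (a,b) \<in> r) xs ys \<Longrightarrow> set xs \<subseteq> carrier M \<and> set ys \<subseteq> carrier M"
  by (induction rule: list_all2_induct) (auto dest: r_sub)

lemma r_cls: "(a,b) \<in> r \<Longrightarrow> cls a = cls b"
  using cls_eq_iff r_sub by blast

lemma zpush_hom: "zpush M r \<in> ring_hom (Zring M) ZQ"
  by (rule ring_hom_memI) (simp_all add: zpush_carrier zpush_mult zpush_add zpush_one)

lemma zpush_zero: "zpush M r (\<lambda>x. 0) = (\<lambda>Q. 0)"
  by (auto simp: zpush_def)

lemma zpush_diff:
  assumes f: "f \<in> carrier (Zring M)" and g: "g \<in> carrier (Zring M)"
  shows "zpush M r (\<lambda>x. f x - g x) = (\<lambda>Q. zpush M r f Q - zpush M r g Q)"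
proof
  fix Q
  show "zpush M r (\<lambda>x. f x - g x) Q = zpush M r f Q - zpush M r g Q"
  proof (cases "Q \<in> carrier M // r")
    case False
    then show ?thesis by (simp add: zpush_out)
  next
    case Q: True
    define S where "S = {x. f x \<noteq> 0} \<union> {x. g x \<noteq> 0}"
    have fin: "finite S" using f g by (auto simp: Zring_carrier S_def)
    have sub: "S \<subseteq> carrier M" using f g by (auto simp: Zring_carrier S_def)
    have e1: "zpush M r (\<lambda>x. f x - g x) Q = (\<Sum>x\<in>{x\<in>S. cls x = Q}. f x - g x)"
      by (rule zpush_eq[OF fin _ sub Q]) (auto simp: S_def)
    have e2: "zpush M r f Q = (\<Sum>x\<in>{x\<in>S. cls x = Q}. f x)"
      by (rule zpush_eq[OF fin _ sub Q]) (auto simp: S_def)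
    have e3: "zpush M r g Q = (\<Sum>x\<in>{x\<in>S. cls x = Q}. g x)"
      by (rule zpush_eq[OF fin _ sub Q]) (auto simp: S_def)
    show ?thesis unfolding e1 e2 e3 by (simp add: sum_subtractf)
  qed
qed

lemma zpush_single:
  assumes a: "a \<in> carrier M"
  shows "zpush M r (ms_int {#a#}) = ms_int {#cls a#}"
proof
  fix Q
  have aq: "cls a \<in> carrier M // r" using a by (rule quotientI)
  show "zpush M r (ms_int {#a#}) Q = ms_int {#cls a#} Q"
  proof (cases "Q \<in> carrier M // r")
    case False
    then have "cls a \<noteq> Q" using aq by blast
    then show ?thesis using False by (simp add: zpush_out ms_int_def)
  next
    case Q: True
    have "zpush M r (ms_int {#a#}) Q = (\<Sum>x\<in>{x\<in>{a}. cls x = Q}. ms_int {#a#} x)"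
      by (rule zpush_eq[OF _ _ _ Q]) (use a in \<open>auto simp: ms_int_def split: if_splits\<close>)
    also have "\<dots> = ms_int {#cls a#} Q"
    proof (cases "cls a = Q")
      case True
      have e: "{x\<in>{a}. cls x = Q} = {a}" using True by auto
      show ?thesis unfolding e using True by (simp add: ms_int_def)
    next
      case False
      have e: "{x\<in>{a}. cls x = Q} = {}" using False by auto
      show ?thesis unfolding e using False by (simp add: ms_int_def)
    qed
    finally show ?thesis .
  qed
qed

lemma zpush_ms:
  "set_mset P \<subseteq> carrier M \<Longrightarrow> zpush M r (ms_int P) = ms_int (image_mset cls P)"
proof (induction P)
  case empty
  then show ?case using zpush_zero by (simp add: ms_int_def)
next
  case (add a P)
  have a: "a \<in> carrier M" and P: "set_mset P \<subseteq> carrier M" using add.prems by auto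
  have "ms_int (add_mset a P) = ms_int {#a#} \<oplus>\<^bsub>Zring M\<^esub> ms_int P"
    using ms_int_add[of "{#a#}" P M] by simp
  then have "zpush M r (ms_int (add_mset a P)) = zpush M r (ms_int {#a#}) \<oplus>\<^bsub>ZQ\<^esub> zpush M r (ms_int P)"
    using zpush_add[OF ms_int_carrier ms_int_carrier] a P by simp
  also have "\<dots> = ms_int {#cls a#} \<oplus>\<^bsub>ZQ\<^esub> ms_int (image_mset cls P)"
    using zpush_single[OF a] add.IH[OF P] by simp
  also have "\<dots> = ms_int (image_mset cls (add_mset a P))"
    using ms_int_add[of "{#cls a#}" "image_mset cls P" QM] by simp
  finally show ?case .
qed

lemma zpush_md:
  assumes "set_mset P \<subseteq> carrier M" "set_mset N \<subseteq> carrier M"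
  shows "zpush M r (md P N) = md (image_mset cls P) (image_mset cls N)"
  unfolding md_def using zpush_diff[OF ms_int_carrier ms_int_carrier] zpush_ms assms by simp

lemma Dr_carrier: "Dr \<subseteq> carrier (Zring M)"
proof
  fix f assume "f \<in> Dr"
  then obtain xs ys where f: "f = md (mset xs) (mset ys)" and l: "list_all2 (\<lambda>a b. (a,b) \<in> r) xs ys"
    unfolding Dr_def by blast
  have "set xs \<subseteq> carrier M" "set ys \<subseteq> carrier M"
    using l2_carrier[OF l] by auto
  then show "f \<in> carrier (Zring M)" unfolding f by (intro md_carrier) auto
qed

lemma Dr_ker: "f \<in> Dr \<Longrightarrow> zpush M r f = \<zero>\<^bsub>ZQ\<^esub>"
proof -
  assume "f \<in> Dr"
  then obtain xs ys where f: "f = md (mset xs) (mset ys)" and l: "list_all2 (\<lambda>a b. (a,b) \<in> r) xs ys"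
    unfolding Dr_def by blast
  have c: "set xs \<subseteq> carrier M" "set ys \<subseteq> carrier M"
    using l2_carrier[OF l] by auto
  have "map cls xs = map cls ys"
    using l
  proof (induction rule: list_all2_induct)
    case Nil show ?case by simp
  next
    case (Cons x xs y ys)
    then show ?case using r_cls[OF Cons(1)] by simp
  qed
  then have "image_mset cls (mset xs) = image_mset cls (mset ys)" by (metis mset_map)
  then show ?thesis unfolding f using zpush_md[of "mset xs" "mset ys"] c md_same by simp
qed

lemma ker_Dr:
  assumes f: "f \<in> carrier (Zring M)" and z: "zpush M r f = \<zero>\<^bsub>ZQ\<^esub>"
  shows "f \<in> Dr"
proof -
  obtain P N where P: "set_mset P \<subseteq> carrier M" and N: "set_mset N \<subseteq> carrier M" and feq: "f = md P N"
    using Zring_decomp[OF f] by blast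
  have "md (image_mset cls P) (image_mset cls N) = (\<lambda>Q. 0)"
    using z zpush_md[OF P N] feq by (simp add: Zring_zero)
  then have "image_mset cls P = image_mset cls N"
    by (intro multiset_eqI) (metis md_def ms_int_def of_nat_eq_iff eq_iff_diff_eq_0)
  then obtain xs ys where xs: "mset xs = P" and ys: "mset ys = N" and l: "list_all2 (\<lambda>a b. cls a = cls b) xs ys"
    using mset_match by blast
  have c: "set xs \<subseteq> carrier M" "set ys \<subseteq> carrier M" using xs ys P N by auto
  have "list_all2 (\<lambda>a b. (a,b) \<in> r) xs ys"
    using l c by (auto simp: list_all2_conv_all_nth cls_eq_iff[symmetric] subset_iff)
  then show ?thesis unfolding Dr_def feq using xs ys by blast
qed

lemma zpush_surj: "zpush M r ` carrier (Zring M) = carrier ZQ"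
proof
  show "zpush M r ` carrier (Zring M) \<subseteq> carrier ZQ" using zpush_carrier by auto
next
  show "carrier ZQ \<subseteq> zpush M r ` carrier (Zring M)"
  proof
    fix g assume g: "g \<in> carrier ZQ"
    obtain P N where P: "set_mset P \<subseteq> carrier QM" and N: "set_mset N \<subseteq> carrier QM" and geq: "g = md P N"
      using Zring_decomp[OF g] by blast
    define rep where "rep = (\<lambda>Q::'a set. SOME a. a \<in> Q)"
    have rep: "rep Q \<in> Q \<and> cls (rep Q) = Q \<and> rep Q \<in> carrier M" if "Q \<in> carrier M // r" for Q
    proof -
      have "Q \<noteq> {}" using in_quotient_imp_non_empty[OF eqr that] .
      then have rq: "rep Q \<in> Q" unfolding rep_def by (metis some_in_eq)
      moreover have "rep Q \<in> carrier M" using class_sub[OF that] rq by blast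
      ultimately show ?thesis using in_class_iff[OF that] by blast
    qed
    have P': "set_mset (image_mset rep P) \<subseteq> carrier M" using P rep by (auto simp: qm_carrier)
    have N': "set_mset (image_mset rep N) \<subseteq> carrier M" using N rep by (auto simp: qm_carrier)
    have iP: "image_mset cls (image_mset rep P) = P"
    proof -
      have "image_mset cls (image_mset rep P) = image_mset (\<lambda>x. x) P"
        unfolding image_mset.compositionality o_def
        by (rule image_mset_cong) (use P rep in \<open>auto simp: qm_carrier\<close>)
      then show ?thesis by simp
    qed
    have iN: "image_mset cls (image_mset rep N) = N"
    proof -
      have "image_mset cls (image_mset rep N) = image_mset (\<lambda>x. x) N"
        unfolding image_mset.compositionality o_def
        by (rule image_mset_cong) (use N rep in \<open>auto simp: qm_carrier\<close>)
      then show ?thesis by simp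
    qed
    have "zpush M r (md (image_mset rep P) (image_mset rep N)) = g"
      using zpush_md[OF P' N'] iP iN geq by simp
    moreover have "md (image_mset rep P) (image_mset rep N) \<in> carrier (Zring M)"
      using P' N' by (rule md_carrier)
    ultimately show "g \<in> zpush M r ` carrier (Zring M)" by blast
  qed
qed

end


lemma rhc: "cring R \<Longrightarrow> cring S \<Longrightarrow> h \<in> ring_hom R S \<Longrightarrow> ring_hom_cring R S h"
  by (simp add: ring_hom_cring_def ring_hom_cring_axioms_def)

lemma quot_img: "(\<lambda>x. I +>\<^bsub>R\<^esub> x) ` carrier R = carrier (R Quot I)"
  by (auto simp: FactRing_def A_RCOSETS_def')

lemma (in ring_hom_cring) hom_minus:
  "x \<in> carrier R \<Longrightarrow> y \<in> carrier R \<Longrightarrow> h (x \<ominus> y) = h x \<ominus>\<^bsub>S\<^esub> h y"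
  by (simp add: R.minus_eq S.minus_eq)

lemma img_ideal:
  assumes hc: "ring_hom_cring R S h" and sur: "h ` carrier R = carrier S" and I: "ideal I R"
  shows "ideal (h ` I) S"
proof -
  interpret ring_hom_cring R S h by (rule hc)
  interpret I: ideal I R by (rule I)
  show ?thesis
  proof (rule S.ideal_from)
    show "h ` I \<subseteq> carrier S" using I.I_l_closed by (auto intro!: hom_closed dest: I.Icarr)
  next
    show "\<zero>\<^bsub>S\<^esub> \<in> h ` I" by (rule image_eqI[of _ _ "\<zero>\<^bsub>R\<^esub>"]) simp_all
  next
    fix a b assume "a \<in> h ` I" "b \<in> h ` I"
    then obtain x y where "x \<in> I" "y \<in> I" "a = h x" "b = h y" by auto
    then show "a \<oplus>\<^bsub>S\<^esub> b \<in> h ` I"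
      by (intro image_eqI[of _ _ "x \<oplus>\<^bsub>R\<^esub> y"]) (auto dest: I.Icarr)
  next
    fix a assume "a \<in> h ` I"
    then obtain x where "x \<in> I" "a = h x" by auto
    then show "\<ominus>\<^bsub>S\<^esub> a \<in> h ` I"
      by (intro image_eqI[of _ _ "\<ominus>\<^bsub>R\<^esub> x"]) (auto dest: I.Icarr)
  next
    fix a s assume "a \<in> h ` I" "s \<in> carrier S"
    then obtain x y where "x \<in> I" "a = h x" "y \<in> carrier R" "s = h y"
      using sur by (metis image_iff)
    then show "s \<otimes>\<^bsub>S\<^esub> a \<in> h ` I"
      by (intro image_eqI[of _ _ "y \<otimes>\<^bsub>R\<^esub> x"]) (auto dest: I.Icarr intro: I.I_l_closed)
  next
    fix a s assume "a \<in> h ` I" "s \<in> carrier S"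
    then obtain x y where "x \<in> I" "a = h x" "y \<in> carrier R" "s = h y"
      using sur by (metis image_iff)
    then show "a \<otimes>\<^bsub>S\<^esub> s \<in> h ` I"
      by (intro image_eqI[of _ _ "x \<otimes>\<^bsub>R\<^esub> y"]) (auto dest: I.Icarr intro: I.I_r_closed)
  qed
qed

lemma iso_from_homs:
  assumes hc: "ring_hom_cring R S h" and hc': "ring_hom_cring R S' h'"
    and sh: "h ` carrier R = carrier S" and sh': "h' ` carrier R = carrier S'"
    and ker: "\<And>x. x \<in> carrier R \<Longrightarrow> h x = \<zero>\<^bsub>S\<^esub> \<longleftrightarrow> h' x = \<zero>\<^bsub>S'\<^esub>"
  shows "\<exists>\<phi>. \<phi> \<in> ring_iso S' S \<and> (\<forall>x\<in>carrier R. \<phi> (h' x) = h x)"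
proof -
  interpret H: ring_hom_cring R S h by (rule hc)
  interpret H': ring_hom_cring R S' h' by (rule hc')
  have eqv: "h x1 = h x2 \<longleftrightarrow> h' x1 = h' x2" if "x1 \<in> carrier R" "x2 \<in> carrier R" for x1 x2
  proof -
    have "h x1 = h x2 \<longleftrightarrow> h (x1 \<ominus>\<^bsub>R\<^esub> x2) = \<zero>\<^bsub>S\<^esub>"
      using that by (simp add: H.hom_minus H.S.r_right_minus_eq)
    also have "\<dots> \<longleftrightarrow> h' (x1 \<ominus>\<^bsub>R\<^esub> x2) = \<zero>\<^bsub>S'\<^esub>" using that by (intro ker) simp
    also have "\<dots> \<longleftrightarrow> h' x1 = h' x2"
      using that by (simp add: H'.hom_minus H'.S.r_right_minus_eq)
    finally show ?thesis .
  qed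
  define \<phi> where "\<phi> = (\<lambda>y. h (SOME x. x \<in> carrier R \<and> h' x = y))"
  have phi: "\<phi> (h' x) = h x" if x: "x \<in> carrier R" for x
  proof -
    have "\<exists>x0. x0 \<in> carrier R \<and> h' x0 = h' x" using x by blast
    then have s: "(SOME x0. x0 \<in> carrier R \<and> h' x0 = h' x) \<in> carrier R \<and>
        h' (SOME x0. x0 \<in> carrier R \<and> h' x0 = h' x) = h' x" by (rule someI_ex)
    then show ?thesis unfolding \<phi>_def using eqv x by blast
  qed
  have pre: "\<exists>x\<in>carrier R. y = h' x" if "y \<in> carrier S'" for y using that sh' by auto
  have "\<phi> \<in> ring_iso S' S"
  proof (rule ring_iso_memI)
    fix y assume "y \<in> carrier S'"
    then obtain x where "x \<in> carrier R" "y = h' x" using pre by blast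
    then show "\<phi> y \<in> carrier S" by (simp add: phi)
  next
    fix y z assume "y \<in> carrier S'" "z \<in> carrier S'"
    then obtain x w where "x \<in> carrier R" "y = h' x" "w \<in> carrier R" "z = h' w" using pre by blast
    then show "\<phi> (y \<otimes>\<^bsub>S'\<^esub> z) = \<phi> y \<otimes>\<^bsub>S\<^esub> \<phi> z"
      by (simp add: phi H'.hom_mult[symmetric] del: H'.hom_mult)
  next
    fix y z assume "y \<in> carrier S'" "z \<in> carrier S'"
    then obtain x w where "x \<in> carrier R" "y = h' x" "w \<in> carrier R" "z = h' w" using pre by blast
    then show "\<phi> (y \<oplus>\<^bsub>S'\<^esub> z) = \<phi> y \<oplus>\<^bsub>S\<^esub> \<phi> z"
      by (simp add: phi H'.hom_add[symmetric] del: H'.hom_add)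
  next
    show "\<phi> \<one>\<^bsub>S'\<^esub> = \<one>\<^bsub>S\<^esub>" using phi[of "\<one>\<^bsub>R\<^esub>"] by simp
  next
    show "bij_betw \<phi> (carrier S') (carrier S)"
    proof (rule bij_betw_imageI)
      show "inj_on \<phi> (carrier S')"
      proof
        fix y z assume "y \<in> carrier S'" "z \<in> carrier S'" and e: "\<phi> y = \<phi> z"
        then obtain x w where "x \<in> carrier R" "y = h' x" "w \<in> carrier R" "z = h' w" using pre by blast
        then show "y = z" using e eqv by (simp add: phi)
      qed
    next
      show "\<phi> ` carrier S' = carrier S"
      proof
        show "\<phi> ` carrier S' \<subseteq> carrier S"
        proof
          fix u assume "u \<in> \<phi> ` carrier S'"
          then obtain y where "y \<in> carrier S'" "u = \<phi> y" by blast
          then obtain x where "x \<in> carrier R" "u = h x" using pre phi by blast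
          then show "u \<in> carrier S" by simp
        qed
      next
        show "carrier S \<subseteq> \<phi> ` carrier S'"
        proof
          fix u assume "u \<in> carrier S"
          then obtain x where x: "x \<in> carrier R" "u = h x" using sh by auto
          then have "u = \<phi> (h' x)" by (simp add: phi)
          moreover have "h' x \<in> carrier S'" using x by simp
          ultimately show "u \<in> \<phi> ` carrier S'" by blast
        qed
      qed
    qed
  qed
  then show ?thesis using phi by blast
qed


lemma (in cring) ring_mult_diff2: "a \<in> carrier R \<Longrightarrow> b \<in> carrier R \<Longrightarrow> c \<in> carrier R \<Longrightarrow> d \<in> carrier R \<Longrightarrow>
  (a \<ominus> b) \<otimes> c \<oplus> b \<otimes> (c \<ominus> d) = a \<otimes> c \<ominus> b \<otimes> d"
  by algebra

context bpc begin

abbreviation "BB \<equiv> BZ M R"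
abbreviation "pp \<equiv> piZ M R"

lemma ZM_cring: "cring (Zring M)" by (rule Zring_cring[OF cm])
lemma ZQ_cring: "cring ZQ" by (rule Zring_cring[OF qm_cm])
lemma IR_id: "ideal (IR R) (Zring M)" by (rule IR_ideal[OF bp])

lemma BB_cring: "cring BB"
  unfolding BZ_def by (rule ideal.quotient_is_cring[OF IR_id ZM_cring])

lemma pp_eq: "pp = (\<lambda>f. IR R +>\<^bsub>Zring M\<^esub> f)"
  by (rule ext) (simp add: piZ_def)

lemma pp_hc: "ring_hom_cring (Zring M) BB pp"
  unfolding pp_eq BZ_def by (rule ideal.rcos_ring_hom_cring[OF IR_id ZM_cring])

lemma pp_surj: "pp ` carrier (Zring M) = carrier BB"
  unfolding pp_eq BZ_def by (rule quot_img)

lemma quot_zero_iff: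
  assumes "ideal I S" "x \<in> carrier S"
  shows "I +>\<^bsub>S\<^esub> x = \<zero>\<^bsub>S Quot I\<^esub> \<longleftrightarrow> x \<in> I"
proof -
  interpret ideal I S by fact
  show ?thesis using rcos_const_imp_mem[OF assms(2)] a_rcos_zero[OF assms(1)]
    by (auto simp: FactRing_def)
qed

lemma pp_zero: "f \<in> carrier (Zring M) \<Longrightarrow> pp f = \<zero>\<^bsub>BB\<^esub> \<longleftrightarrow> f \<in> IR R"
  unfolding pp_eq BZ_def by (rule quot_zero_iff[OF IR_id])

lemma iZ_eq: "iZ M R a = pp (ms_int {#a#})"
proof -
  have "(\<lambda>x. if x = a then 1 else 0) = ms_int {#a#}" by (auto simp: ms_int_def)
  then show ?thesis by (simp add: iZ_def)
qed

lemma finsum_ms: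
  assumes "\<forall>k<n. c k \<in> carrier M"
  shows "(\<Oplus>\<^bsub>Zring M\<^esub> k\<in>{..<n}. ms_int {#c k#}) = ms_int (mset (map c [0..<n]))"
  using assms
proof (induction n)
  case 0
  interpret Z: cring "Zring M" by (rule ZM_cring)
  show ?case by (simp add: ms_int_empty[of M, symmetric])
next
  case (Suc n)
  interpret Z: cring "Zring M" by (rule ZM_cring)
  have c: "\<forall>k<n. c k \<in> carrier M" "c n \<in> carrier M" using Suc.prems by auto
  have "(\<Oplus>\<^bsub>Zring M\<^esub> k\<in>{..<Suc n}. ms_int {#c k#}) = ms_int {#c n#} \<oplus>\<^bsub>Zring M\<^esub> (\<Oplus>\<^bsub>Zring M\<^esub> k\<in>{..<n}. ms_int {#c k#})"
    unfolding lessThan_Suc using c by (intro Z.finsum_insert) (auto intro!: ms_int_carrier)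
  also have "\<dots> = ms_int ({#c n#} + mset (map c [0..<n]))"
    using Suc.IH[OF c(1)] ms_int_add[of "{#c n#}" "mset (map c [0..<n])" M] by simp
  also have "{#c n#} + mset (map c [0..<n]) = mset (map c [0..<Suc n])" by simp
  finally show ?case .
qed

lemma finsum_iZ:
  assumes "\<forall>k<n. c k \<in> carrier M"
  shows "(\<Oplus>\<^bsub>BB\<^esub> k\<in>{..<n}. iZ M R (c k)) = pp (ms_int (mset (map c [0..<n])))"
proof -
  interpret H: ring_hom_cring "Zring M" BB pp by (rule pp_hc)
  have "(\<Oplus>\<^bsub>BB\<^esub> k\<in>{..<n}. iZ M R (c k)) = (\<Oplus>\<^bsub>BB\<^esub> k\<in>{..<n}. (pp \<circ> (\<lambda>k. ms_int {#c k#})) k)"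
    by (simp add: iZ_eq o_def)
  also have "\<dots> = pp (\<Oplus>\<^bsub>Zring M\<^esub> k\<in>{..<n}. ms_int {#c k#})"
    using assms by (intro H.hom_finsum[symmetric]) (auto intro!: ms_int_carrier)
  also have "\<dots> = pp (ms_int (mset (map c [0..<n])))" using finsum_ms[OF assms] by simp
  finally show ?thesis .
qed

lemma sums_eq:
  assumes P: "\<And>a b. P a b \<Longrightarrow> a \<in> carrier M \<and> b \<in> carrier M"
  shows "{(\<Oplus>\<^bsub>BB\<^esub> k\<in>{..<n}. iZ M R (c k)) \<ominus>\<^bsub>BB\<^esub> (\<Oplus>\<^bsub>BB\<^esub> k\<in>{..<n}. iZ M R (d k))
     | (n::nat) c d. \<forall>k<n. P (c k) (d k)}
   = pp ` {md (mset xs) (mset ys) | xs ys. list_all2 P xs ys}"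
proof -
  interpret H: ring_hom_cring "Zring M" BB pp by (rule pp_hc)
  have key: "(\<Oplus>\<^bsub>BB\<^esub> k\<in>{..<n}. iZ M R (c k)) \<ominus>\<^bsub>BB\<^esub> (\<Oplus>\<^bsub>BB\<^esub> k\<in>{..<n}. iZ M R (d k))
      = pp (md (mset (map c [0..<n])) (mset (map d [0..<n])))"
    if "\<forall>k<n. P (c k) (d k)" for n c d
  proof -
    have c: "\<forall>k<n. c k \<in> carrier M" and d: "\<forall>k<n. d k \<in> carrier M" using that P by auto
    have sc: "set_mset (mset (map c [0..<n])) \<subseteq> carrier M" using c by auto
    have sd: "set_mset (mset (map d [0..<n])) \<subseteq> carrier M" using d by auto
    show ?thesis unfolding finsum_iZ[OF c] finsum_iZ[OF d] md_eq[OF cm sc sd]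
      by (rule H.hom_minus[symmetric]) (rule ms_int_carrier[OF sc], rule ms_int_carrier[OF sd])
  qed
  show ?thesis
  proof
    show "{(\<Oplus>\<^bsub>BB\<^esub> k\<in>{..<n}. iZ M R (c k)) \<ominus>\<^bsub>BB\<^esub> (\<Oplus>\<^bsub>BB\<^esub> k\<in>{..<n}. iZ M R (d k))
     | (n::nat) c d. \<forall>k<n. P (c k) (d k)} \<subseteq> pp ` {md (mset xs) (mset ys) | xs ys. list_all2 P xs ys}"
    proof
      fix z assume "z \<in> {(\<Oplus>\<^bsub>BB\<^esub> k\<in>{..<n}. iZ M R (c k)) \<ominus>\<^bsub>BB\<^esub> (\<Oplus>\<^bsub>BB\<^esub> k\<in>{..<n}. iZ M R (d k))
        | (n::nat) c d. \<forall>k<n. P (c k) (d k)}"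
      then have "\<exists>(n::nat) c d. z = (\<Oplus>\<^bsub>BB\<^esub> k\<in>{..<n}. iZ M R (c k)) \<ominus>\<^bsub>BB\<^esub> (\<Oplus>\<^bsub>BB\<^esub> k\<in>{..<n}. iZ M R (d k))
          \<and> (\<forall>k<n. P (c k) (d k))" by (simp only: mem_Collect_eq)
      then obtain n :: nat and c d where
        z: "z = (\<Oplus>\<^bsub>BB\<^esub> k\<in>{..<n}. iZ M R (c k)) \<ominus>\<^bsub>BB\<^esub> (\<Oplus>\<^bsub>BB\<^esub> k\<in>{..<n}. iZ M R (d k))"
        and ncd: "\<forall>k<n. P (c k) (d k)"
        by blast
      have "list_all2 P (map c [0..<n]) (map d [0..<n])"
        using ncd by (simp add: list_all2_conv_all_nth)
      then show "z \<in> pp ` {md (mset xs) (mset ys) | xs ys. list_all2 P xs ys}"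
        unfolding z key[OF ncd] by blast
    qed
  next
    show "pp ` {md (mset xs) (mset ys) | xs ys. list_all2 P xs ys} \<subseteq> {(\<Oplus>\<^bsub>BB\<^esub> k\<in>{..<n}. iZ M R (c k)) \<ominus>\<^bsub>BB\<^esub> (\<Oplus>\<^bsub>BB\<^esub> k\<in>{..<n}. iZ M R (d k))
     | (n::nat) c d. \<forall>k<n. P (c k) (d k)}"
    proof
      fix z assume "z \<in> pp ` {md (mset xs) (mset ys) | xs ys. list_all2 P xs ys}"
      then obtain xs ys where l: "list_all2 P xs ys" and z: "z = pp (md (mset xs) (mset ys))" by blast
      define n where "n = length xs"
      have len: "length ys = n" using l by (simp add: n_def list_all2_lengthD)
      have ncd: "\<forall>k<n. P ((!) xs k) ((!) ys k)" using l by (simp add: list_all2_conv_all_nth n_def)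
      have "map ((!) xs) [0..<n] = xs" "map ((!) ys) [0..<n] = ys"
        using len by (metis map_nth n_def)+
      then have "z = (\<Oplus>\<^bsub>BB\<^esub> k\<in>{..<n}. iZ M R ((!) xs k)) \<ominus>\<^bsub>BB\<^esub> (\<Oplus>\<^bsub>BB\<^esub> k\<in>{..<n}. iZ M R ((!) ys k))"
        using key[OF ncd] z by simp
      then show "z \<in> {(\<Oplus>\<^bsub>BB\<^esub> k\<in>{..<n}. iZ M R (c k)) \<ominus>\<^bsub>BB\<^esub> (\<Oplus>\<^bsub>BB\<^esub> k\<in>{..<n}. iZ M R (d k))
        | (n::nat) c d. \<forall>k<n. P (c k) (d k)}" using ncd by blast
    qed
  qed
qed

lemma IZ_eq: "IZ M R r = pp ` Dr"
proof -
  have P: "(\<lambda>a b. a \<in> carrier M \<and> b \<in> carrier M \<and> (a,b) \<in> r) = (\<lambda>a b. (a,b) \<in> r)"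
    using r_sub by blast
  have "IZ M R r = pp ` {md (mset xs) (mset ys) | xs ys. list_all2 (\<lambda>a b. a \<in> carrier M \<and> b \<in> carrier M \<and> (a,b) \<in> r) xs ys}"
    unfolding IZ_def by (rule sums_eq) blast
  then show ?thesis unfolding P Dr_def .
qed

lemma zpush_hc: "ring_hom_cring (Zring M) ZQ (zpush M r)"
  by (rule rhc[OF ZM_cring ZQ_cring zpush_hom])

lemma Dr_kernel: "Dr = a_kernel (Zring M) ZQ (zpush M r)"
  unfolding a_kernel_def' using Dr_carrier Dr_ker ker_Dr by blast

lemma Dr_ideal: "ideal Dr (Zring M)"
proof -
  have "ring_hom_ring (Zring M) ZQ (zpush M r)"
    by (intro ring_hom_ringI2 cring.axioms(1)[OF ZM_cring] cring.axioms(1)[OF ZQ_cring] zpush_hom)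
  then show ?thesis unfolding Dr_kernel by (rule ring_hom_ring.kernel_is_ideal)
qed

lemma IZ_ideal: "ideal (IZ M R r) BB"
  unfolding IZ_eq by (rule img_ideal[OF pp_hc pp_surj Dr_ideal])

end


lemma md_trans: "md Xa Y \<oplus>\<^bsub>Zring M\<^esub> md Y Z = md Xa Z"
  by (auto simp: md_def Zring_add)

context bpc begin

abbreviation "QR \<equiv> quot_preadd M R r"
abbreviation "J \<equiv> IR QR"
abbreviation "K \<equiv> zpush M r ` IR R"

lemma K_ideal: "ideal K ZQ" by (rule img_ideal[OF zpush_hc zpush_surj IR_id])

lemma R_NA: "(Xa,Ya) \<in> R \<Longrightarrow> set_mset Xa \<subseteq> carrier M \<and> set_mset Ya \<subseteq> carrier M"
proof -
  assume a: "(Xa,Ya) \<in> R"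
  have "equiv (NA M) R" using bp by (simp add: blueprint_def pre_addition_def)
  then have "R \<subseteq> NA M \<times> NA M" by (rule equivE)
  then show ?thesis using a by (auto simp: NA_def)
qed

lemma IR_md: "IR R' = {md Xa Ya | Xa Ya. (Xa,Ya) \<in> R'}"
  by (simp add: IR_def md_def)

lemma img_in_QR: "(Xa,Ya) \<in> R \<Longrightarrow> (image_mset cls Xa, image_mset cls Ya) \<in> QR"
  unfolding quot_preadd_def by blast

lemma K_sub_J: "K \<subseteq> J"
proof
  fix z assume "z \<in> K"
  then obtain f where f: "f \<in> IR R" and z: "z = zpush M r f" by blast
  then obtain Xa Ya where XY: "(Xa,Ya) \<in> R" and feq: "f = md Xa Ya" unfolding IR_md by blast
  have "z = md (image_mset cls Xa) (image_mset cls Ya)"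
    unfolding z feq using R_NA[OF XY] by (intro zpush_md) auto
  then show "z \<in> J" unfolding IR_md using img_in_QR[OF XY] by blast
qed

lemma J_sub_K: "J \<subseteq> K"
proof -
  interpret KI: ideal K ZQ by (rule K_ideal)
  interpret QMc: comm_monoid QM by (rule qm_cm)
  define S where "S = {(Xa,Y). set_mset Xa \<subseteq> carrier QM \<and> set_mset Y \<subseteq> carrier QM \<and> md Xa Y \<in> K}"
  have NAQ: "NA QM = {Xa. set_mset Xa \<subseteq> carrier QM}" by (simp add: NA_def)
  have mdc: "md Xa Y \<in> carrier ZQ" if "set_mset Xa \<subseteq> carrier QM" "set_mset Y \<subseteq> carrier QM" for Xa Y
    using that by (rule md_carrier)
  have msc: "ms_int Xa \<in> carrier ZQ" if "set_mset Xa \<subseteq> carrier QM" for Xa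
    using that by (rule ms_int_carrier)
  have eqS: "equiv (NA QM) S"
  proof (rule equivI)
    show "S \<subseteq> NA QM \<times> NA QM" by (auto simp: S_def NAQ)
  next
    show "refl_on (NA QM) S"
    proof (unfold refl_on_def, intro ballI)
      fix Xa assume "Xa \<in> NA QM"
      moreover have "md Xa Xa \<in> K" using md_same[of Xa QM] KI.zero_closed by simp
      ultimately show "(Xa,Xa) \<in> S" by (simp add: S_def NAQ)
    qed
  next
    show "sym S"
    proof (unfold sym_def, intro allI impI)
      fix Xa Y assume "(Xa,Y) \<in> S"
      then have c: "set_mset Xa \<subseteq> carrier QM" "set_mset Y \<subseteq> carrier QM" and k: "md Xa Y \<in> K"
        by (auto simp: S_def)
      have "md Y Xa = \<ominus>\<^bsub>ZQ\<^esub> md Xa Y" using md_neg[OF qm_cm c] by simp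
      then have "md Y Xa \<in> K" using k by simp
      then show "(Y,Xa) \<in> S" using c by (simp add: S_def)
    qed
  next
    show "trans S"
    proof (unfold trans_def, intro allI impI)
      fix Xa Y Z assume "(Xa,Y) \<in> S" "(Y,Z) \<in> S"
      then have c: "set_mset Xa \<subseteq> carrier QM" "set_mset Z \<subseteq> carrier QM" and k: "md Xa Y \<in> K" "md Y Z \<in> K"
        by (auto simp: S_def)
      have "md Xa Z = md Xa Y \<oplus>\<^bsub>ZQ\<^esub> md Y Z" by (simp add: md_trans)
      then have "md Xa Z \<in> K" using k by simp
      then show "(Xa,Z) \<in> S" using c by (simp add: S_def)
    qed
  qed
  have preS: "pre_addition QM S"
    unfolding pre_addition_def
  proof (intro conjI eqS allI impI)
    fix Xa Y Z W assume a1: "(Xa,Y) \<in> S" and a2: "(Z,W) \<in> S"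
    have c: "set_mset Xa \<subseteq> carrier QM" "set_mset Y \<subseteq> carrier QM"
      "set_mset Z \<subseteq> carrier QM" "set_mset W \<subseteq> carrier QM" and k: "md Xa Y \<in> K" "md Z W \<in> K"
      using a1 a2 by (auto simp: S_def)
    have "md (Xa + Z) (Y + W) = md Xa Y \<oplus>\<^bsub>ZQ\<^esub> md Z W" by (simp add: md_add)
    then have "md (Xa + Z) (Y + W) \<in> K" using k by simp
    then show "(Xa + Z, Y + W) \<in> S" using c by (simp add: S_def)
  next
    fix Xa Y Z W assume a1: "(Xa,Y) \<in> S" and a2: "(Z,W) \<in> S"
    have c: "set_mset Xa \<subseteq> carrier QM" "set_mset Y \<subseteq> carrier QM"
      "set_mset Z \<subseteq> carrier QM" "set_mset W \<subseteq> carrier QM" and k: "md Xa Y \<in> K" "md Z W \<in> K"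
      using a1 a2 by (auto simp: S_def)
    interpret ZQr: cring ZQ by (rule ZQ_cring)
    have c2: "set_mset (mset_mult QM Xa Z) \<subseteq> carrier QM" "set_mset (mset_mult QM Y W) \<subseteq> carrier QM"
      using c set_mset_mset_mult[OF _ _ QMc.monoid_axioms] by auto
    have "md (mset_mult QM Xa Z) (mset_mult QM Y W)
        = ms_int (mset_mult QM Xa Z) \<ominus>\<^bsub>ZQ\<^esub> ms_int (mset_mult QM Y W)"
      by (rule md_eq[OF qm_cm c2])
    also have "\<dots> = ms_int Xa \<otimes>\<^bsub>ZQ\<^esub> ms_int Z \<ominus>\<^bsub>ZQ\<^esub> ms_int Y \<otimes>\<^bsub>ZQ\<^esub> ms_int W"
      using c by (simp add: ms_int_mult[OF qm_cm])
    also have "\<dots> = (ms_int Xa \<ominus>\<^bsub>ZQ\<^esub> ms_int Y) \<otimes>\<^bsub>ZQ\<^esub> ms_int Z \<oplus>\<^bsub>ZQ\<^esub> ms_int Y \<otimes>\<^bsub>ZQ\<^esub> (ms_int Z \<ominus>\<^bsub>ZQ\<^esub> ms_int W)"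
      by (rule ZQr.ring_mult_diff2[symmetric]) (use c msc in auto)
    also have "\<dots> = md Xa Y \<otimes>\<^bsub>ZQ\<^esub> ms_int Z \<oplus>\<^bsub>ZQ\<^esub> ms_int Y \<otimes>\<^bsub>ZQ\<^esub> md Z W"
      using c by (simp add: md_eq[OF qm_cm])
    finally have e: "md (mset_mult QM Xa Z) (mset_mult QM Y W) = md Xa Y \<otimes>\<^bsub>ZQ\<^esub> ms_int Z \<oplus>\<^bsub>ZQ\<^esub> ms_int Y \<otimes>\<^bsub>ZQ\<^esub> md Z W" .
    have "md Xa Y \<otimes>\<^bsub>ZQ\<^esub> ms_int Z \<in> K" using k(1) msc[OF c(3)] by (rule KI.I_r_closed)
    moreover have "ms_int Y \<otimes>\<^bsub>ZQ\<^esub> md Z W \<in> K" using k(2) msc[OF c(2)] by (rule KI.I_l_closed)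
    ultimately have "md (mset_mult QM Xa Z) (mset_mult QM Y W) \<in> K" unfolding e by (rule additive_subgroup.a_closed[OF KI.is_additive_subgroup])
    then show "(mset_mult QM Xa Z, mset_mult QM Y W) \<in> S" using c2 by (simp add: S_def)
  qed
  have imgS: "{(image_mset cls Xa, image_mset cls Ya) | Xa Ya. (Xa,Ya) \<in> R} \<subseteq> S"
  proof
    fix p assume "p \<in> {(image_mset cls Xa, image_mset cls Ya) | Xa Ya. (Xa,Ya) \<in> R}"
    then obtain Xa Ya where XY: "(Xa,Ya) \<in> R" and p: "p = (image_mset cls Xa, image_mset cls Ya)" by blast
    have c: "set_mset Xa \<subseteq> carrier M" "set_mset Ya \<subseteq> carrier M" using R_NA[OF XY] by auto
    have "md (image_mset cls Xa) (image_mset cls Ya) = zpush M r (md Xa Ya)" by (rule zpush_md[OF c, symmetric])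
    moreover have "md Xa Ya \<in> IR R" unfolding IR_md using XY by blast
    ultimately have "md (image_mset cls Xa) (image_mset cls Ya) \<in> K" by simp
    moreover have "set_mset (image_mset cls Xa) \<subseteq> carrier QM" "set_mset (image_mset cls Ya) \<subseteq> carrier QM"
      using c by (auto simp: qm_carrier intro: quotientI)
    ultimately show "p \<in> S" unfolding p by (simp add: S_def)
  qed
  have "QR \<subseteq> S" unfolding quot_preadd_def using preS imgS by blast
  then have QS: "(Xa,Ya) \<in> QR \<Longrightarrow> md Xa Ya \<in> K" for Xa Ya unfolding S_def by blast
  show "J \<subseteq> K"
  proof
    fix z assume "z \<in> J"
    then obtain Xa Ya where "(Xa,Ya) \<in> QR" "z = md Xa Ya" unfolding IR_def md_def by blast
    then show "z \<in> K" using QS by simp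
  qed
qed

lemma J_eq: "J = K" using J_sub_K K_sub_J by blast

lemma J_ideal: "ideal J ZQ" unfolding J_eq by (rule K_ideal)

end


context bpc begin

lemma BQ_eq: "BZ QM QR = ZQ Quot J" by (simp add: BZ_def)

lemma piQ_eq: "piZ QM QR = (\<lambda>g. J +>\<^bsub>ZQ\<^esub> g)" by (rule ext) (simp add: piZ_def)

lemma ker_equiv:
  assumes f: "f \<in> carrier (Zring M)"
  shows "pp f \<in> IZ M R r \<longleftrightarrow> zpush M r f \<in> J"
proof -
  interpret Hp: ring_hom_cring "Zring M" BB pp by (rule pp_hc)
  interpret Hz: ring_hom_cring "Zring M" ZQ "zpush M r" by (rule zpush_hc)
  interpret IRI: ideal "IR R" "Zring M" by (rule IR_id)
  show ?thesis unfolding IZ_eq J_eq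
  proof
    assume "pp f \<in> pp ` Dr"
    then obtain g where g: "g \<in> Dr" "pp f = pp g" by blast
    have gc: "g \<in> carrier (Zring M)" using g(1) Dr_carrier by blast
    have "pp (f \<ominus>\<^bsub>Zring M\<^esub> g) = \<zero>\<^bsub>BB\<^esub>"
      using g(2) f gc by (simp add: Hp.hom_minus Hp.S.r_right_minus_eq)
    moreover have fgc: "f \<ominus>\<^bsub>Zring M\<^esub> g \<in> carrier (Zring M)" using f gc by simp
    ultimately have fg: "f \<ominus>\<^bsub>Zring M\<^esub> g \<in> IR R" using pp_zero[OF fgc] by simp
    have "zpush M r f = zpush M r (f \<ominus>\<^bsub>Zring M\<^esub> g) \<oplus>\<^bsub>ZQ\<^esub> zpush M r g"
    proof -
      have "(f \<ominus>\<^bsub>Zring M\<^esub> g) \<oplus>\<^bsub>Zring M\<^esub> g = f"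
        using f gc by (simp add: Hp.R.minus_eq Hp.R.a_assoc Hp.R.l_neg)
      moreover have "zpush M r ((f \<ominus>\<^bsub>Zring M\<^esub> g) \<oplus>\<^bsub>Zring M\<^esub> g) = zpush M r (f \<ominus>\<^bsub>Zring M\<^esub> g) \<oplus>\<^bsub>ZQ\<^esub> zpush M r g"
        by (rule Hz.hom_add[OF fgc gc])
      ultimately show ?thesis by simp
    qed
    also have "\<dots> = zpush M r (f \<ominus>\<^bsub>Zring M\<^esub> g)"
      using Dr_ker[OF g(1)] f gc by simp
    finally show "zpush M r f \<in> zpush M r ` IR R" using fg by blast
  next
    assume "zpush M r f \<in> zpush M r ` IR R"
    then obtain h0 where h0: "h0 \<in> IR R" "zpush M r f = zpush M r h0" by blast
    have hc: "h0 \<in> carrier (Zring M)" using h0(1) IRI.Icarr by blast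
    have "zpush M r (f \<ominus>\<^bsub>Zring M\<^esub> h0) = \<zero>\<^bsub>ZQ\<^esub>"
      using h0(2) f hc by (simp add: Hz.hom_minus Hz.S.r_right_minus_eq)
    then have "f \<ominus>\<^bsub>Zring M\<^esub> h0 \<in> Dr" using f hc by (intro ker_Dr) simp_all
    moreover have "pp (f \<ominus>\<^bsub>Zring M\<^esub> h0) = pp f"
    proof -
      have "pp h0 = \<zero>\<^bsub>BB\<^esub>" using pp_zero hc h0(1) by simp
      then show ?thesis using f hc by (simp add: Hp.hom_minus Hp.S.minus_eq)
    qed
    ultimately show "pp f \<in> pp ` Dr" by (metis image_eqI)
  qed
qed

lemma part2:
  "\<exists>\<phi>. \<phi> \<in> ring_iso (BZ QM QR) (BB Quot IZ M R r)
      \<and> (\<forall>f\<in>carrier (Zring M). \<phi> (piZ QM QR (zpush M r f)) = IZ M R r +>\<^bsub>BB\<^esub> pp f)"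
proof -
  interpret IZI: ideal "IZ M R r" BB by (rule IZ_ideal)
  interpret JI: ideal J ZQ by (rule J_ideal)
  have q1: "ring_hom_cring BB (BB Quot IZ M R r) (\<lambda>x. IZ M R r +>\<^bsub>BB\<^esub> x)"
    by (rule IZI.rcos_ring_hom_cring[OF BB_cring])
  have q2: "ring_hom_cring ZQ (BZ QM QR) (piZ QM QR)"
    unfolding piQ_eq BQ_eq by (rule JI.rcos_ring_hom_cring[OF ZQ_cring])
  have hc: "ring_hom_cring (Zring M) (BB Quot IZ M R r) (\<lambda>f. IZ M R r +>\<^bsub>BB\<^esub> pp f)"
  proof -
    have "(\<lambda>x. IZ M R r +>\<^bsub>BB\<^esub> x) \<circ> pp \<in> ring_hom (Zring M) (BB Quot IZ M R r)"
      by (rule ring_hom_trans[OF ring_hom_cring.homh[OF pp_hc] ring_hom_cring.homh[OF q1]])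
    then show ?thesis
      by (intro rhc ZM_cring IZI.quotient_is_cring BB_cring) (simp add: o_def)
  qed
  have hc': "ring_hom_cring (Zring M) (BZ QM QR) (\<lambda>f. piZ QM QR (zpush M r f))"
  proof -
    have "piZ QM QR \<circ> zpush M r \<in> ring_hom (Zring M) (BZ QM QR)"
      by (rule ring_hom_trans[OF zpush_hom ring_hom_cring.homh[OF q2]])
    moreover have "cring (BZ QM QR)" unfolding BQ_eq by (rule JI.quotient_is_cring[OF ZQ_cring])
    ultimately show ?thesis
      by (intro rhc ZM_cring) (simp_all add: o_def)
  qed
  have sh: "(\<lambda>f. IZ M R r +>\<^bsub>BB\<^esub> pp f) ` carrier (Zring M) = carrier (BB Quot IZ M R r)"
  proof -
    have "(\<lambda>f. IZ M R r +>\<^bsub>BB\<^esub> pp f) ` carrier (Zring M) = (\<lambda>x. IZ M R r +>\<^bsub>BB\<^esub> x) ` (pp ` carrier (Zring M))"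
      by (simp add: image_image)
    also have "\<dots> = carrier (BB Quot IZ M R r)" unfolding pp_surj by (rule quot_img)
    finally show ?thesis .
  qed
  have sh': "(\<lambda>f. piZ QM QR (zpush M r f)) ` carrier (Zring M) = carrier (BZ QM QR)"
  proof -
    have "(\<lambda>f. piZ QM QR (zpush M r f)) ` carrier (Zring M) = piZ QM QR ` (zpush M r ` carrier (Zring M))"
      by (simp add: image_image)
    also have "\<dots> = carrier (BZ QM QR)" unfolding zpush_surj piQ_eq BQ_eq by (rule quot_img)
    finally show ?thesis .
  qed
  have ker: "IZ M R r +>\<^bsub>BB\<^esub> pp f = \<zero>\<^bsub>BB Quot IZ M R r\<^esub> \<longleftrightarrow> piZ QM QR (zpush M r f) = \<zero>\<^bsub>BZ QM QR\<^esub>"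
    if f: "f \<in> carrier (Zring M)" for f
  proof -
    have "IZ M R r +>\<^bsub>BB\<^esub> pp f = \<zero>\<^bsub>BB Quot IZ M R r\<^esub> \<longleftrightarrow> pp f \<in> IZ M R r"
      by (rule quot_zero_iff[OF IZ_ideal]) (use f pp_surj in blast)
    also have "\<dots> \<longleftrightarrow> zpush M r f \<in> J" by (rule ker_equiv[OF f])
    also have "\<dots> \<longleftrightarrow> piZ QM QR (zpush M r f) = \<zero>\<^bsub>BZ QM QR\<^esub>"
      unfolding piQ_eq BQ_eq by (rule quot_zero_iff[OF J_ideal, symmetric]) (rule zpush_carrier[OF f])
    finally show ?thesis .
  qed
  show ?thesis using iso_from_homs[OF hc hc' sh sh' ker] by simp
qed

end


lemma md_cons: "md (mset (x # xs)) (mset (y # ys)) = md {#x#} {#y#} \<oplus>\<^bsub>Zring M\<^esub> md (mset xs) (mset ys)"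
  using md_add[where Xm="{#x#}" and Y="{#y#}" and Z="mset xs" and W="mset ys" and M=M] by simp

lemma list_all2_swap': "list_all2 P xs ys \<Longrightarrow> list_all2 (\<lambda>a b. P b a) ys xs"
  by (simp add: list_all2_conv_all_nth)

context bpc begin

lemma part3:
  assumes Iid: "bp_ideal M R I" and rI: "r = sim_low M R I"
  shows "IZ M R r = {(\<Oplus>\<^bsub>BB\<^esub> k\<in>{..<n}. iZ M R (c k)) \<ominus>\<^bsub>BB\<^esub> (\<Oplus>\<^bsub>BB\<^esub> k\<in>{..<n}. iZ M R (d k))
                      | (n::nat) c d. \<forall>k<n. c k \<in> I \<and> d k \<in> I}"
proof -
  interpret Hp: ring_hom_cring "Zring M" BB pp by (rule pp_hc)
  have IC: "I \<subseteq> carrier M" using Iid by (simp add: bp_ideal_def)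
  define DI where "DI = {md (mset xs) (mset ys) | xs ys. list_all2 (\<lambda>a b. a \<in> I \<and> b \<in> I) xs ys}"
  define PI where "PI = pp ` DI"
  have RHS: "{(\<Oplus>\<^bsub>BB\<^esub> k\<in>{..<n}. iZ M R (c k)) \<ominus>\<^bsub>BB\<^esub> (\<Oplus>\<^bsub>BB\<^esub> k\<in>{..<n}. iZ M R (d k))
                      | (n::nat) c d. \<forall>k<n. c k \<in> I \<and> d k \<in> I} = PI"
    unfolding PI_def DI_def by (rule sums_eq) (use IC in blast)
  have eqR: "equiv (NA M) R" using bp by (simp add: blueprint_def pre_addition_def)
  have reflR: "(Xa,Xa) \<in> R" if "set_mset Xa \<subseteq> carrier M" for Xa
    using eqR that unfolding equiv_def refl_on_def NA_def by blast
  define L where "L = lin_ext M (sim_up (carrier M) I)"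
  have simlow: "sim_low M R I = {(a,b). a \<in> carrier M \<and> b \<in> carrier M \<and> ({#a#},{#b#}) \<in> (R O L)\<^sup>+ O R}"
    by (simp add: sim_low_def L_def)
  have II_r: "(a,b) \<in> r" if "a \<in> I" "b \<in> I" for a b
  proof -
    have c: "a \<in> carrier M" "b \<in> carrier M" using that IC by auto
    have "(mset [a], mset [b]) \<in> {(mset xs, mset ys) | xs ys. set xs \<subseteq> carrier M \<and> set ys \<subseteq> carrier M \<and>
                                 list_all2 (\<lambda>a b. (a,b) \<in> sim_up (carrier M) I) xs ys}"
      unfolding mem_Collect_eq
      by (rule exI[of _ "[a]"], rule exI[of _ "[b]"]) (use c that in \<open>simp add: sim_up_def\<close>)
    then have "(mset [a], mset [b]) \<in> L" unfolding L_def lin_ext_def by (rule subsetD[OF equiv_gen_sub])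
    then have ab: "({#a#},{#b#}) \<in> L" by simp
    have "({#a#},{#a#}) \<in> R" "({#b#},{#b#}) \<in> R" using reflR c by auto
    then have "({#a#},{#b#}) \<in> (R O L)\<^sup>+ O R" using ab by blast
    then show ?thesis unfolding rI simlow using c by simp
  qed
  have DI_Dr: "DI \<subseteq> Dr"
  proof
    fix z assume "z \<in> DI"
    then obtain xs ys where z: "z = md (mset xs) (mset ys)" and l: "list_all2 (\<lambda>a b. a \<in> I \<and> b \<in> I) xs ys"
      unfolding DI_def by blast
    have "list_all2 (\<lambda>a b. (a,b) \<in> r) xs ys" using l by (rule list_all2_mono) (use II_r in blast)
    then show "z \<in> Dr" unfolding Dr_def z by blast
  qed
  have DIc: "DI \<subseteq> carrier (Zring M)" using DI_Dr Dr_carrier by blast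
  have PI0: "\<zero>\<^bsub>BB\<^esub> \<in> PI"
  proof -
    have "md (mset []) (mset []) \<in> DI" unfolding DI_def by blast
    moreover have "md (mset []) (mset []) = \<zero>\<^bsub>Zring M\<^esub>" by (simp add: md_same[where M=M])
    ultimately show ?thesis unfolding PI_def by (metis Hp.hom_zero image_eqI)
  qed
  have PIadd: "u \<oplus>\<^bsub>BB\<^esub> v \<in> PI" if uP: "u \<in> PI" and vP: "v \<in> PI" for u v
  proof -
    obtain xs ys where u: "u = pp (md (mset xs) (mset ys))" and l: "list_all2 (\<lambda>a b. a \<in> I \<and> b \<in> I) xs ys"
      using uP unfolding PI_def DI_def by blast
    obtain xs' ys' where v: "v = pp (md (mset xs') (mset ys'))" and l': "list_all2 (\<lambda>a b. a \<in> I \<and> b \<in> I) xs' ys'"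
      using vP unfolding PI_def DI_def by blast
    have c: "md (mset xs) (mset ys) \<in> carrier (Zring M)" "md (mset xs') (mset ys') \<in> carrier (Zring M)"
      using l l' DIc unfolding DI_def by blast+
    have "u \<oplus>\<^bsub>BB\<^esub> v = pp (md (mset xs) (mset ys) \<oplus>\<^bsub>Zring M\<^esub> md (mset xs') (mset ys'))"
      unfolding u v using c by simp
    also have "\<dots> = pp (md (mset (xs @ xs')) (mset (ys @ ys')))" by (simp add: md_add)
    finally show ?thesis unfolding PI_def DI_def using list_all2_appendI[OF l l'] by blast
  qed
  have PIneg: "\<ominus>\<^bsub>BB\<^esub> u \<in> PI" if uP: "u \<in> PI" for u
  proof -
    obtain xs ys where u: "u = pp (md (mset xs) (mset ys))" and l: "list_all2 (\<lambda>a b. a \<in> I \<and> b \<in> I) xs ys"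
      using uP unfolding PI_def DI_def by blast
    have c: "set_mset (mset xs) \<subseteq> carrier M" "set_mset (mset ys) \<subseteq> carrier M"
    proof -
      have "set xs \<subseteq> I \<and> set ys \<subseteq> I" using l by (induction rule: list_all2_induct) auto
      then show "set_mset (mset xs) \<subseteq> carrier M" "set_mset (mset ys) \<subseteq> carrier M" using IC by auto
    qed
    have "\<ominus>\<^bsub>BB\<^esub> u = pp (\<ominus>\<^bsub>Zring M\<^esub> md (mset xs) (mset ys))"
      unfolding u using md_carrier[OF c] by simp
    also have "\<dots> = pp (md (mset ys) (mset xs))" by (simp add: md_neg[OF cm c])
    finally have e: "\<ominus>\<^bsub>BB\<^esub> u = pp (md (mset ys) (mset xs))" .
    have l2: "list_all2 (\<lambda>a b. a \<in> I \<and> b \<in> I) ys xs"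
      using list_all2_swap'[OF l] by (simp add: conj_commute)
    have "md (mset ys) (mset xs) \<in> DI" unfolding DI_def mem_Collect_eq
      by (rule exI[of _ ys], rule exI[of _ xs]) (simp add: l2)
    then show ?thesis unfolding e PI_def by (rule imageI)
  qed
  define T where "T = {(Xa,Y). set_mset Xa \<subseteq> carrier M \<and> set_mset Y \<subseteq> carrier M \<and> pp (md Xa Y) \<in> PI}"
  have eqT: "equiv (NA M) T"
  proof (rule equivI)
    show "T \<subseteq> NA M \<times> NA M" by (auto simp: T_def NA_def)
  next
    show "refl_on (NA M) T"
    proof (unfold refl_on_def, intro ballI)
      fix Xa assume "Xa \<in> NA M"
      moreover have "pp (md Xa Xa) \<in> PI" using PI0 by (simp add: md_same[where M=M])
      ultimately show "(Xa,Xa) \<in> T" by (simp add: T_def NA_def)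
    qed
  next
    show "sym T"
    proof (unfold sym_def, intro allI impI)
      fix Xa Y assume "(Xa,Y) \<in> T"
      then have c: "set_mset Xa \<subseteq> carrier M" "set_mset Y \<subseteq> carrier M" and k: "pp (md Xa Y) \<in> PI"
        by (auto simp: T_def)
      have "pp (md Y Xa) = \<ominus>\<^bsub>BB\<^esub> pp (md Xa Y)"
        using md_neg[OF cm c] md_carrier[OF c] by (metis Hp.hom_a_inv)
      then have "pp (md Y Xa) \<in> PI" using PIneg[OF k] by simp
      then show "(Y,Xa) \<in> T" using c by (simp add: T_def)
    qed
  next
    show "trans T"
    proof (unfold trans_def, intro allI impI)
      fix Xa Y Z assume "(Xa,Y) \<in> T" "(Y,Z) \<in> T"
      then have c: "set_mset Xa \<subseteq> carrier M" "set_mset Y \<subseteq> carrier M" "set_mset Z \<subseteq> carrier M"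
        and k: "pp (md Xa Y) \<in> PI" "pp (md Y Z) \<in> PI"
        by (auto simp: T_def)
      have "pp (md Xa Z) = pp (md Xa Y \<oplus>\<^bsub>Zring M\<^esub> md Y Z)" by (simp add: md_trans)
      also have "\<dots> = pp (md Xa Y) \<oplus>\<^bsub>BB\<^esub> pp (md Y Z)"
        using md_carrier[OF c(1,2)] md_carrier[OF c(2,3)] by simp
      finally have "pp (md Xa Z) \<in> PI" using PIadd[OF k] by simp
      then show "(Xa,Z) \<in> T" using c by (simp add: T_def)
    qed
  qed
  have RT: "R \<subseteq> T"
  proof
    fix p assume p: "p \<in> R"
    obtain Xa Y where pe: "p = (Xa,Y)" by (cases p)
    have c: "set_mset Xa \<subseteq> carrier M" "set_mset Y \<subseteq> carrier M" using R_NA p pe by auto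
    have "md Xa Y \<in> IR R" unfolding IR_md using p pe by blast
    then have "pp (md Xa Y) = \<zero>\<^bsub>BB\<^esub>" using pp_zero md_carrier[OF c] by simp
    then show "p \<in> T" using PI0 c pe by (simp add: T_def)
  qed
  have pair_PI: "pp (md {#x#} {#y#}) \<in> PI" if "(x,y) \<in> sim_up (carrier M) I" for x y
  proof (cases "x = y")
    case True
    then show ?thesis using PI0 by (simp add: md_same[where M=M])
  next
    case False
    then have "x \<in> I" "y \<in> I" using that by (auto simp: sim_up_def)
    then have "md (mset [x]) (mset [y]) \<in> DI" unfolding DI_def mem_Collect_eq
      by (intro exI[of _ "[x]"] exI[of _ "[y]"]) simp
    then have "pp (md (mset [x]) (mset [y])) \<in> PI" unfolding PI_def by (rule imageI)
    then show ?thesis by simp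
  qed
  have LT: "L \<subseteq> T"
    unfolding L_def lin_ext_def
  proof (rule equiv_gen_least[OF eqT])
    show "{(mset xs, mset ys) | xs ys. set xs \<subseteq> carrier M \<and> set ys \<subseteq> carrier M \<and>
           list_all2 (\<lambda>a b. (a,b) \<in> sim_up (carrier M) I) xs ys} \<subseteq> T"
    proof
      fix p assume "p \<in> {(mset xs, mset ys) | xs ys. set xs \<subseteq> carrier M \<and> set ys \<subseteq> carrier M \<and>
           list_all2 (\<lambda>a b. (a,b) \<in> sim_up (carrier M) I) xs ys}"
      then obtain xs ys where p: "p = (mset xs, mset ys)" and c: "set xs \<subseteq> carrier M" "set ys \<subseteq> carrier M"
        and l: "list_all2 (\<lambda>a b. (a,b) \<in> sim_up (carrier M) I) xs ys" by blast
      have "pp (md (mset xs) (mset ys)) \<in> PI"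
        using l c
      proof (induction rule: list_all2_induct)
        case Nil
        then show ?case using PI0 by (simp add: md_same[where M=M])
      next
        case (Cons x xs y ys)
        have cx: "x \<in> carrier M" "y \<in> carrier M" "set xs \<subseteq> carrier M" "set ys \<subseteq> carrier M"
          using Cons.prems by auto
        have "pp (md (mset (x # xs)) (mset (y # ys))) = pp (md {#x#} {#y#}) \<oplus>\<^bsub>BB\<^esub> pp (md (mset xs) (mset ys))"
          unfolding md_cons[where M=M] using cx by (simp add: md_carrier)
        then show ?case using PIadd[OF pair_PI[OF Cons.hyps(1)] Cons.IH[OF cx(3,4)]] by simp
      qed
      then show "p \<in> T" using p c by (simp add: T_def)
    qed
  qed
  have transT: "trans T" using eqT by (rule equivE)
  have "R O L \<subseteq> T" using RT LT transT unfolding trans_def by blast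
  then have "(R O L)\<^sup>+ \<subseteq> T" using transT by (metis trancl_id trancl_mono subsetI)
  then have rT: "(R O L)\<^sup>+ O R \<subseteq> T" using RT transT unfolding trans_def by blast
  have r_PI: "pp (md {#x#} {#y#}) \<in> PI" if "(x,y) \<in> r" for x y
  proof -
    have "({#x#},{#y#}) \<in> (R O L)\<^sup>+ O R" using that unfolding rI simlow by blast
    then show ?thesis using rT by (auto simp: T_def)
  qed
  have Dr_PI: "pp ` Dr \<subseteq> PI"
  proof
    fix z assume "z \<in> pp ` Dr"
    then obtain xs ys where z: "z = pp (md (mset xs) (mset ys))" and l: "list_all2 (\<lambda>a b. (a,b) \<in> r) xs ys"
      unfolding Dr_def by blast
    have "pp (md (mset xs) (mset ys)) \<in> PI"
      using l
    proof (induction rule: list_all2_induct)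
      case Nil
      then show ?case using PI0 by (simp add: md_same[where M=M])
    next
      case (Cons x xs y ys)
      have cx: "set_mset {#x#} \<subseteq> carrier M" "set_mset {#y#} \<subseteq> carrier M"
        "set_mset (mset xs) \<subseteq> carrier M" "set_mset (mset ys) \<subseteq> carrier M"
        using r_sub[OF Cons.hyps(1)] l2_carrier[OF Cons.hyps(2)] by auto
      have "pp (md (mset (x # xs)) (mset (y # ys))) = pp (md {#x#} {#y#}) \<oplus>\<^bsub>BB\<^esub> pp (md (mset xs) (mset ys))"
        unfolding md_cons[where M=M] using md_carrier[OF cx(1,2)] md_carrier[OF cx(3,4)] by simp
      then show ?case using PIadd[OF r_PI[OF Cons.hyps(1)] Cons.IH] by simp
    qed
    then show "z \<in> PI" using z by simp
  qed
  have "pp ` Dr = PI" using Dr_PI DI_Dr unfolding PI_def by blast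
  then show ?thesis using RHS IZ_eq by simp
qed

end


theorem mainTheorem12:
  fixes M :: "('a,'b) monoid_scheme"
    and R :: "('a multiset \<times> 'a multiset) set"
    and r :: "('a \<times> 'a) set"
  assumes "blueprint M R"
    and "bp_congruence M R r"
  shows "ideal (IZ M R r) (BZ M R)
    \<and> (\<exists>\<phi>. \<phi> \<in> ring_iso (BZ (quot_monoid M r) (quot_preadd M R r)) (BZ M R Quot IZ M R r)
          \<and> (\<forall>f\<in>carrier (Zring M).
               \<phi> (piZ (quot_monoid M r) (quot_preadd M R r) (zpush M r f))
               = IZ M R r +>\<^bsub>BZ M R\<^esub> piZ M R f))
    \<and> (\<forall>I. bp_ideal M R I \<and> r = sim_low M R I \<longrightarrow>
          IZ M R r = {(\<Oplus>\<^bsub>BZ M R\<^esub> k\<in>{..<n}. iZ M R (c k)) \<ominus>\<^bsub>BZ M R\<^esub> (\<Oplus>\<^bsub>BZ M R\<^esub> k\<in>{..<n}. iZ M R (d k))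
                      | (n::nat) c d. \<forall>k<n. c k \<in> I \<and> d k \<in> I})"
proof -
  interpret bpc M R r by (unfold_locales) (rule assms(1), rule assms(2))
  show ?thesis using IZ_ideal part2 part3 by blast
qed

end
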